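(* Let $\boldsymbol\phi(n,m,\alpha,\beta,l)\in\mathbb C^N$ satisfy the condition equation set (for all arguments, only the indicated variable shifted) $\sigma_1\boldsymbol\phi(n-1,\cdot,l)=\boldsymbol\phi(n,\cdot,l)-\boldsymbol\phi(n-1,\cdot,l+1)$, $\sigma_2\boldsymbol\phi(m-1,\cdot,l)=\boldsymbol\phi(m,\cdot,l)-\boldsymbol\phi(m-1,\cdot,l+1)$, $\sigma_3\boldsymbol\phi(\alpha-1,\cdot,l)=\boldsymbol\phi(\alpha,\cdot,l)-\boldsymbol\phi(\alpha-1,\cdot,l+1)$, $\sigma_4\boldsymbol\phi(\beta-1,\cdot,l)=\boldsymbol\phi(\beta,\cdot,l)-\boldsymbol\phi(\beta-1,\cdot,l+1)$, and $\boldsymbol K\boldsymbol\phi(l)=\boldsymbol\phi(l+4)-\epsilon_1\boldsymbol\phi(l+3)+\epsilon_2\boldsymbol\phi(l+2)-\epsilon_3\boldsymbol\phi(l+1)$ for a constant $N\times N$ matrix $\boldsymbol K$. Let $f'=|0,\dots,N-1|$, $g'=|0,\dots,N-2,N|$ (Casoratians of $\boldsymbol\phi$). Then, writing $\sigma^-_{ij}=\sigma_i-\sigma_j$, $$\sigma^-_{13}\widetilde f'\dot{\check f}'-\sigma^-_{14}f'\widetilde{\dot{\check f}}'+\sigma^-_{34}\dot f'\widetilde{\check f}'=0,\qquad \sigma^-_{23}\widehat f'\dot{\check f}'-\sigma^-_{24}f'\widehat{\dot{\check f}}'+\sigma^-_{34}\dot f'\widehat{\check f}'=0,$$ $$f'(\sigma_3\widetilde{\check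 f}'+\widetilde{\check g}')+\sigma^-_{13}\widetilde f'\check f'-(\sigma_1f'+g')\widetilde{\check f}'=0,\qquad f'(\sigma_3\widehat{\check f}'+\widehat{\check g}')+\sigma^-_{23}\widehat f'\check f'-(\sigma_2f'+g')\widehat{\check f}'=0,$$ $$\widetilde f'(\sigma_1\dot f'+\dot g')-\sigma^-_{14}f'\widetilde{\dot f}'-(\sigma_4\widetilde f'+\widetilde g')\dot f'=0,\qquad \widehat f'(\sigma_2\dot f'+\dot g')-\sigma^-_{24}f'\widehat{\dot f}'-(\sigma_4\widehat f'+\widehat g')\dot f'=0,$$ $$\sigma^-_{14}\widetilde{\dot f}'\widehat f'-\sigma^-_{24}\widehat{\dot f}'\widetilde f'-\sigma^-_{12}\widehat{\widetilde f}'\dot f'=0,$$ $$(\sigma_3\check f'+\check g')\widehat{\widetilde{\dot f}}'-\check f'(\widehat{\widetilde{\dot g}}'-\sigma_4\widehat{\widetilde{\dot f}}')-\frac{R(\sigma_1,\sigma_4)}{\sigma^-_{12}\sigma^-_{13}}\widehat{\dot f}'\widetilde{\check f}'+\frac{R(\sigma_2,\sigma_4)}{\sigma^-_{12}\sigma^-_{23}}\widetilde{\dot f}'\widehat{\check f}'+(\sigma_1+\sigma_2+\epsilon_1)\check f'\widehat{\widetilde{\dot f}}'-\frac{R(\sigma_3,\sigma_4)}{\sigma^-_{13}\sigma^-_{23}}f'\widehat{\widetilde{\dot{\check f}}}'=0.$$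
   Context: Fix $\alpha_1,\alpha_2,\alpha_3,\delta\in\mathbb C$ and pairwise distinct $p,q,a,b\in\mathbb C$. Put $\sigma_1=p-\delta$, $\sigma_2=q-\delta$, $\sigma_3=a-\delta$, $\sigma_4=b-\delta$; $\epsilon_1=4\delta-\alpha_3$, $\epsilon_2=6\delta^2-3\delta\alpha_3+\alpha_2$, $\epsilon_3=4\delta^3-3\delta^2\alpha_3+2\delta\alpha_2-\alpha_1$; $R(x,y)=(x+y)(x^2+y^2)+\epsilon_1((x+y)^2-xy)+\epsilon_2(x+y)+\epsilon_3$. Casoratian notation: $|l_1,\dots,l_N|=\det(\boldsymbol\phi(l_1),\dots,\boldsymbol\phi(l_N))$ with $\boldsymbol\phi(l)=\boldsymbol\phi(n,m,\alpha,\beta,l)$; a run "$0,\dots,j$" with $j<0$ is empty. Shifts: $\widetilde F=F(n+1,m,\alpha,\beta)$, $\widehat F=F(n,m+1,\alpha,\beta)$, $\check F=F(n,m,\alpha-1,\beta)$, $\dot F=F(n,m,\alpha,\beta+1)$, composed as needed. *)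

theory Defs
  imports "Jordan_Normal_Form.Determinant"
begin

definition eps1 :: "complex \<Rightarrow> complex \<Rightarrow> complex" where
  "eps1 \<delta> a3 = 4*\<delta> - a3"

definition eps2 :: "complex \<Rightarrow> complex \<Rightarrow> complex \<Rightarrow> complex" where
  "eps2 \<delta> a2 a3 = 6*\<delta>^2 - 3*\<delta>*a3 + a2"

definition eps3 :: "complex \<Rightarrow> complex \<Rightarrow> complex \<Rightarrow> complex \<Rightarrow> complex" where
  "eps3 \<delta> a1 a2 a3 = 4*\<delta>^3 - 3*\<delta>^2*a3 + 2*\<delta>*a2 - a1"

definition Rpoly :: "complex \<Rightarrow> complex \<Rightarrow> complex \<Rightarrow> complex \<Rightarrow> complex \<Rightarrow> complex" where
  "Rpoly e1 e2 e3 x y = (x+y)*(x^2+y^2) + e1*((x+y)^2 - x*y) + e2*(x+y) + e3"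

definition casoratian :: "nat \<Rightarrow> (int \<Rightarrow> complex vec) \<Rightarrow> (nat \<Rightarrow> int) \<Rightarrow> complex" where
  "casoratian N v ls = det (mat N N (\<lambda>(i,j). v (ls j) $ i))"

definition fC :: "nat \<Rightarrow> (int \<Rightarrow> int \<Rightarrow> int \<Rightarrow> int \<Rightarrow> int \<Rightarrow> complex vec) \<Rightarrow> int \<Rightarrow> int \<Rightarrow> int \<Rightarrow> int \<Rightarrow> complex" where
  "fC N \<phi> n m al be = casoratian N (\<phi> n m al be) (\<lambda>j. int j)"

definition gC :: "nat \<Rightarrow> (int \<Rightarrow> int \<Rightarrow> int \<Rightarrow> int \<Rightarrow> int \<Rightarrow> complex vec) \<Rightarrow> int \<Rightarrow> int \<Rightarrow> int \<Rightarrow> int \<Rightarrow> complex" where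
  "gC N \<phi> n m al be = casoratian N (\<phi> n m al be) (\<lambda>j. if j = N - 1 then int N else int j)"

end

theory Submission
  imports Defs "Jordan_Normal_Form.Char_Poly"
begin

definition ent :: "(nat \<Rightarrow> complex vec) \<Rightarrow> complex poly \<Rightarrow> nat \<Rightarrow> complex" where
  "ent \<psi> q i = (\<Sum>k\<le>degree q. coeff q k * (\<psi> k $ i))"

lemma ent_bound:
  assumes "degree q \<le> d"
  shows "ent \<psi> q i = (\<Sum>k\<le>d. coeff q k * (\<psi> k $ i))"
  unfolding ent_def
  by (rule sum.mono_neutral_left) (use assms in \<open>auto simp: not_le intro!: coeff_eq_0\<close>)

lemma ent_add: "ent \<psi> (p + q) i = ent \<psi> p i + ent \<psi> q i"
proof -
  let ?d = "max (degree p) (degree q)"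
  have "ent \<psi> (p + q) i = (\<Sum>k\<le>?d. coeff (p+q) k * (\<psi> k $ i))"
    by (rule ent_bound) (simp add: degree_add_le)
  also have "\<dots> = (\<Sum>k\<le>?d. coeff p k * (\<psi> k $ i)) + (\<Sum>k\<le>?d. coeff q k * (\<psi> k $ i))"
    by (simp add: distrib_right sum.distrib)
  also have "\<dots> = ent \<psi> p i + ent \<psi> q i"
    using ent_bound[of p ?d \<psi> i] ent_bound[of q ?d \<psi> i] by simp
  finally show ?thesis .
qed

lemma ent_smult: "ent \<psi> (smult c p) i = c * ent \<psi> p i"
proof -
  have "ent \<psi> (smult c p) i = (\<Sum>k\<le>degree p. coeff (smult c p) k * (\<psi> k $ i))"
    by (rule ent_bound) simp
  also have "\<dots> = c * ent \<psi> p i" by (simp add: ent_def sum_distrib_left mult.assoc)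
  finally show ?thesis .
qed

lemma ent_0[simp]: "ent \<psi> 0 i = 0" by (simp add: ent_def)

lemma ent_minus: "ent \<psi> (p - q) i = ent \<psi> p i - ent \<psi> q i"
  using ent_add[of \<psi> "p - q" q i] by simp

lemma ent_sum: "ent \<psi> (\<Sum>x\<in>S. f x) i = (\<Sum>x\<in>S. ent \<psi> (f x) i)"
  by (induction S rule: infinite_finite_induct) (auto simp: ent_add)

lemma ent_pCons: "ent \<psi> (pCons a q) i = a * (\<psi> 0 $ i) + ent (\<lambda>k. \<psi> (Suc k)) q i"
proof -
  have "ent \<psi> (pCons a q) i = (\<Sum>k\<le>Suc (degree q). coeff (pCons a q) k * (\<psi> k $ i))"
    by (rule ent_bound) (simp add: degree_pCons_le)
  also have "\<dots> = a * (\<psi> 0 $ i) + (\<Sum>k\<le>degree q. coeff q k * (\<psi> (Suc k) $ i))"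
    by (subst sum.atMost_Suc_shift) simp
  finally show ?thesis by (simp add: ent_def)
qed

definition cm :: "nat \<Rightarrow> (nat \<Rightarrow> complex vec) \<Rightarrow> (nat \<Rightarrow> complex poly) \<Rightarrow> complex mat" where
  "cm N \<psi> B = mat N N (\<lambda>(i,j). ent \<psi> (B j) i)"

definition om :: "nat \<Rightarrow> (nat \<Rightarrow> complex vec) \<Rightarrow> (nat \<Rightarrow> complex poly) \<Rightarrow> complex" where
  "om N \<psi> B = det (cm N \<psi> B)"

lemma cm_carrier[simp]: "cm N \<psi> B \<in> carrier_mat N N" by (simp add: cm_def)
lemma cm_dims[simp]: "dim_row (cm N \<psi> B) = N" "dim_col (cm N \<psi> B) = N" by (simp_all add: cm_def)

lemma om_cong: assumes "\<And>j. j < N \<Longrightarrow> B j = B' j" shows "om N \<psi> B = om N \<psi> B'"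
proof -
  have "cm N \<psi> B = cm N \<psi> B'" unfolding cm_def by (rule eq_matI) (auto simp: assms)
  thus ?thesis by (simp add: om_def)
qed

lemma cofactor_indep:
  assumes "\<And>j. j \<noteq> k \<Longrightarrow> B j = B' j"
  shows "cofactor (cm N \<psi> B) i k = cofactor (cm N \<psi> B') i k"
proof -
  have "mat_delete (cm N \<psi> B) i k = mat_delete (cm N \<psi> B') i k"
    unfolding mat_delete_def by (rule eq_matI) (auto simp: cm_def assms)
  thus ?thesis by (simp add: cofactor_def)
qed

lemma om_lin: assumes k: "k < N"
  shows "om N \<psi> (B(k:=p)) = (\<Sum>i<N. ent \<psi> p i * cofactor (cm N \<psi> B) i k)"
proof -
  have "om N \<psi> (B(k:=p)) = (\<Sum>i<N. cm N \<psi> (B(k:=p)) $$ (i,k) * cofactor (cm N \<psi> (B(k:=p))) i k)"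
    unfolding om_def by (rule laplace_expansion_column[OF cm_carrier k])
  also have "\<dots> = (\<Sum>i<N. ent \<psi> p i * cofactor (cm N \<psi> B) i k)"
  proof (rule sum.cong[OF refl])
    fix i assume "i \<in> {..<N}"
    hence "cm N \<psi> (B(k:=p)) $$ (i,k) = ent \<psi> p i" using k by (simp add: cm_def)
    moreover have "cofactor (cm N \<psi> (B(k:=p))) i k = cofactor (cm N \<psi> B) i k"
      by (rule cofactor_indep) simp
    ultimately show "cm N \<psi> (B(k:=p)) $$ (i,k) * cofactor (cm N \<psi> (B(k:=p))) i k = ent \<psi> p i * cofactor (cm N \<psi> B) i k"
      by simp
  qed
  finally show ?thesis .
qed

lemma om_add: "k < N \<Longrightarrow> om N \<psi> (B(k := p + q)) = om N \<psi> (B(k:=p)) + om N \<psi> (B(k:=q))"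
  by (simp add: om_lin ent_add distrib_right sum.distrib)

lemma om_smult: "k < N \<Longrightarrow> om N \<psi> (B(k := smult c p)) = c * om N \<psi> (B(k:=p))"
  by (simp add: om_lin ent_smult sum_distrib_left mult.assoc)

lemma om_sum: "k < N \<Longrightarrow> om N \<psi> (B(k := (\<Sum>x\<in>S. f x))) = (\<Sum>x\<in>S. om N \<psi> (B(k:=f x)))"
  by (simp add: om_lin ent_sum sum_distrib_right sum.swap[of _ S])

lemma om_minus: "k < N \<Longrightarrow> om N \<psi> (B(k := p - q)) = om N \<psi> (B(k:=p)) - om N \<psi> (B(k:=q))"
  by (simp add: om_lin ent_minus left_diff_distrib sum_subtractf)

lemma om_self: "om N \<psi> (B(k := B k)) = om N \<psi> B" by simp

lemma om_alt: assumes "j < N" "k < N" "j \<noteq> k" "B j = B k" shows "om N \<psi> B = 0"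
  unfolding om_def
  by (rule det_identical_columns[OF cm_carrier assms(3) assms(1) assms(2)])
    (rule eq_vecI, auto simp: cm_def assms)

lemma om_addcol: assumes "j < N" "k < N" "j \<noteq> k"
  shows "om N \<psi> (B(k := B k + smult c (B j))) = om N \<psi> B"
proof -
  have "om N \<psi> (B(k := B j)) = 0" by (rule om_alt[of j N k]) (use assms in auto)
  thus ?thesis using assms by (simp add: om_add om_smult)
qed

lemma om_swap: assumes "j < N" "k < N" "j \<noteq> k"
  shows "om N \<psi> (B(j := a, k := b)) = - om N \<psi> (B(j := b, k := a))"
proof -
  let ?C = "\<lambda>x y. om N \<psi> (B(j := x, k := y))"
  have lin1: "?C (x + y) z = ?C x z + ?C y z" for x y z
  proof -
    have "B(j := x + y, k := z) = (B(k:=z))(j := x + y)" using assms by (simp add: fun_upd_twist)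
    moreover have "B(j := x, k := z) = (B(k:=z))(j := x)" "B(j := y, k := z) = (B(k:=z))(j := y)"
      using assms by (simp_all add: fun_upd_twist)
    ultimately show ?thesis using assms by (simp add: om_add)
  qed
  have lin2: "?C z (x + y) = ?C z x + ?C z y" for x y z
    using assms by (simp add: om_add)
  have z: "?C x x = 0" for x by (rule om_alt[of j N k]) (use assms in auto)
  have "0 = ?C (a+b) (a+b)" by (simp add: z)
  also have "\<dots> = ?C a a + ?C a b + (?C b a + ?C b b)" by (simp add: lin1 lin2)
  also have "\<dots> = ?C a b + ?C b a" by (simp add: z)
  finally show ?thesis by (simp add: eq_neg_iff_add_eq_0)
qed

lemma om_move_aux:
  "\<forall>k f. N - 1 - k = d \<longrightarrow> k < N \<longrightarrow> om N \<psi> (f(k:=x)) = (-1)^d * om N \<psi> (\<lambda>j. if j<k then f j else if j < N-1 then f (Suc j) else x)"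
proof (induction d)
  case 0
  show ?case
  proof (intro allI impI)
    fix k and f :: "nat \<Rightarrow> complex poly" assume "N - 1 - k = 0" "k < N"
    hence k: "k = N - 1" by simp
    show "om N \<psi> (f(k:=x)) = (-1)^0 * om N \<psi> (\<lambda>j. if j<k then f j else if j < N-1 then f (Suc j) else x)"
      by (simp, rule om_cong) (use k in auto)
  qed
next
  case (Suc d)
  show ?case
  proof (intro allI impI)
    fix k and f :: "nat \<Rightarrow> complex poly" assume d0: "N - 1 - k = Suc d" "k < N"
    hence kN: "Suc k < N" and d: "N - 1 - Suc k = d" by auto
    define f' where "f' = f(k := f (Suc k))"
    have "f(k:=x, Suc k := f (Suc k)) = f(k:=x)" by (rule ext) auto
    hence "om N \<psi> (f(k:=x)) = om N \<psi> (f(k:=x, Suc k := f (Suc k)))" by simp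
    also have "\<dots> = - om N \<psi> (f(k:=f (Suc k), Suc k := x))"
      by (rule om_swap) (use kN in auto)
    also have "f(k:=f (Suc k), Suc k := x) = f'(Suc k := x)" by (simp add: f'_def)
    also have "om N \<psi> (f'(Suc k := x)) = (-1)^d * om N \<psi> (\<lambda>j. if j < Suc k then f' j else if j < N-1 then f' (Suc j) else x)"
      using Suc.IH d kN by blast
    also have "om N \<psi> (\<lambda>j. if j < Suc k then f' j else if j < N-1 then f' (Suc j) else x)
       = om N \<psi> (\<lambda>j. if j<k then f j else if j < N-1 then f (Suc j) else x)"
      by (rule om_cong) (use kN in \<open>auto simp: f'_def less_Suc_eq\<close>)
    finally have h: "om N \<psi> (f(k:=x)) = - ((-1)^d * om N \<psi> (\<lambda>j. if j<k then f j else if j < N-1 then f (Suc j) else x))" .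
    show "om N \<psi> (f(k:=x)) = (-1)^Suc d * om N \<psi> (\<lambda>j. if j<k then f j else if j < N-1 then f (Suc j) else x)"
      unfolding h by simp
  qed
qed

lemma om_move: assumes "k < N"
  shows "om N \<psi> (f(k:=x)) = (-1)^(N-1-k) * om N \<psi> (\<lambda>j. if j<k then f j else if j < N-1 then f (Suc j) else x)"
  using om_move_aux[where d="N-1-k"] assms by blast

abbreviation X :: "complex poly" where "X \<equiv> [:0,1:]"

lemma lin_X: "[:v,1:] * p = smult v p + X * p"
  by (simp add: mult_pCons_left)

lemma om_newton: assumes V: "V = [:v,1:] * W" and N: "0 < N"
  shows "om N \<psi> (\<lambda>j. W * X^j) = om N \<psi> (\<lambda>j. if j = 0 then W else V * X^(j-1))"
proof -
  define Q where "Q m = (\<lambda>j. if m \<le> j \<and> 0 < j then V * X^(j-1) else W * X^j)" for m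
  have step: "om N \<psi> (Q m) = om N \<psi> (Q (Suc m))" if m: "1 \<le> m" "m < N" for m
  proof -
    have eq: "V * X^(m-1) = W * X^m + smult v (W * X^(m-1))"
    proof -
      have "X^m = X * X^(m-1)" using m by (cases m) auto
      thus ?thesis unfolding V by (simp add: lin_X algebra_simps)
    qed
    have "om N \<psi> (Q m) = om N \<psi> ((Q (Suc m))(m := Q (Suc m) m + smult v (Q (Suc m) (m-1))))"
      by (rule om_cong) (use m eq in \<open>auto simp: Q_def\<close>)
    also have "\<dots> = om N \<psi> (Q (Suc m))"
      by (rule om_addcol) (use m in auto)
    finally show ?thesis .
  qed
  have "d \<le> N - 1 \<Longrightarrow> om N \<psi> (Q (N - d)) = om N \<psi> (Q N)" for d
  proof (induction d)
    case (Suc d)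
    hence "om N \<psi> (Q (N - Suc d)) = om N \<psi> (Q (Suc (N - Suc d)))" by (intro step) auto
    also have "Suc (N - Suc d) = N - d" using Suc.prems by auto
    finally show ?case using Suc by auto
  qed simp
  from this[of "N-1"] have "om N \<psi> (Q 1) = om N \<psi> (Q N)" using N by simp
  moreover have "om N \<psi> (Q N) = om N \<psi> (\<lambda>j. W * X^j)" by (rule om_cong) (auto simp: Q_def)
  moreover have "om N \<psi> (Q 1) = om N \<psi> (\<lambda>j. if j = 0 then W else V * X^(j-1))"
    by (rule om_cong) (auto simp: Q_def)
  ultimately show ?thesis by simp
qed

lemma om_expand:
  fixes B :: "nat \<Rightarrow> complex poly"
  shows "om N \<psi> (\<lambda>j. smult z (B j) + B (Suc j)) = (\<Sum>s\<le>N. z^s * om N \<psi> (\<lambda>j. if j < s then B j else B (Suc j)))"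
proof -
  define M where "M j = smult z (B j) + B (Suc j)" for j
  define Z where "Z m t = (\<lambda>j. if j<m then M j else if j<t then B j else B (Suc j))" for m t
  have Zl: "m < t \<Longrightarrow> t \<le> N \<Longrightarrow> om N \<psi> (Z m t) = z^m * om N \<psi> (Z 0 t)" for m t
  proof (induction m)
    case 0 then show ?case by simp
  next
    case (Suc m)
    have "om N \<psi> (Z (Suc m) t) = om N \<psi> ((Z m t)(m := smult z (B m) + B (Suc m)))"
      by (rule om_cong) (auto simp: Z_def M_def)
    also have "\<dots> = z * om N \<psi> ((Z m t)(m := B m)) + om N \<psi> ((Z m t)(m := B (Suc m)))"
      using Suc.prems by (simp add: om_add om_smult)
    also have "(Z m t)(m := B m) = Z m t" using Suc.prems by (intro ext) (auto simp: Z_def)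
    also have "om N \<psi> ((Z m t)(m := B (Suc m))) = 0"
      by (rule om_alt[of m N "Suc m"]) (use Suc.prems in \<open>auto simp: Z_def\<close>)
    finally show ?case using Suc by simp
  qed
  have Zs: "t \<le> N \<Longrightarrow> om N \<psi> (Z t t) = (\<Sum>s\<le>t. z^s * om N \<psi> (Z 0 s))" for t
  proof (induction t)
    case 0 then show ?case by simp
  next
    case (Suc t)
    have "om N \<psi> (Z (Suc t) (Suc t)) = om N \<psi> ((Z t t)(t := smult z (B t) + B (Suc t)))"
      by (rule om_cong) (auto simp: Z_def M_def)
    also have "\<dots> = z * om N \<psi> ((Z t t)(t := B t)) + om N \<psi> ((Z t t)(t := B (Suc t)))"
      using Suc.prems by (simp add: om_add om_smult)
    also have "(Z t t)(t := B t) = Z t (Suc t)" by (rule ext) (auto simp: Z_def less_Suc_eq)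
    also have "(Z t t)(t := B (Suc t)) = Z t t" by (rule ext) (auto simp: Z_def)
    also have "om N \<psi> (Z t (Suc t)) = z^t * om N \<psi> (Z 0 (Suc t))" using Suc.prems by (intro Zl) auto
    finally show ?case using Suc by (simp add: algebra_simps)
  qed
  have "om N \<psi> (\<lambda>j. smult z (B j) + B (Suc j)) = om N \<psi> (Z N N)"
    by (rule om_cong) (auto simp: Z_def M_def)
  also have "\<dots> = (\<Sum>s\<le>N. z^s * om N \<psi> (Z 0 s))" by (rule Zs) simp
  also have "\<dots> = (\<Sum>s\<le>N. z^s * om N \<psi> (\<lambda>j. if j < s then B j else B (Suc j)))"
    by (simp add: Z_def)
  finally show ?thesis .
qed

lemma om_cramer_vec:
  assumes i: "i < N"
  shows "om N \<psi> B * ent \<psi> x i = (\<Sum>k<N. om N \<psi> (B(k:=x)) * ent \<psi> (B k) i)"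
proof -
  let ?A = "cm N \<psi> B"
  have "(\<Sum>k<N. om N \<psi> (B(k:=x)) * ent \<psi> (B k) i)
      = (\<Sum>k<N. (\<Sum>j<N. ent \<psi> x j * cofactor ?A j k) * ent \<psi> (B k) i)"
    by (simp add: om_lin)
  also have "\<dots> = (\<Sum>k<N. \<Sum>j<N. ent \<psi> x j * cofactor ?A j k * ent \<psi> (B k) i)"
    by (simp only: sum_distrib_right)
  also have "\<dots> = (\<Sum>j<N. \<Sum>k<N. ent \<psi> x j * cofactor ?A j k * ent \<psi> (B k) i)"
    by (rule sum.swap)
  also have "\<dots> = (\<Sum>j<N. ent \<psi> x j * (\<Sum>k<N. ?A $$ (i,k) * cofactor ?A j k))"
  proof (rule sum.cong[OF refl])
    fix j
    have "(\<Sum>k<N. ent \<psi> x j * cofactor ?A j k * ent \<psi> (B k) i) = (\<Sum>k<N. ent \<psi> x j * (?A $$ (i,k) * cofactor ?A j k))"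
      by (rule sum.cong[OF refl]) (use i in \<open>simp add: cm_def\<close>)
    thus "(\<Sum>k<N. ent \<psi> x j * cofactor ?A j k * ent \<psi> (B k) i) = ent \<psi> x j * (\<Sum>k<N. ?A $$ (i,k) * cofactor ?A j k)"
      by (simp only: sum_distrib_left)
  qed
  also have "\<dots> = (\<Sum>j<N. ent \<psi> x j * (if i = j then det ?A else 0))"
  proof (rule sum.cong[OF refl])
    fix j assume j: "j \<in> {..<N}"
    have "(?A * adj_mat ?A) $$ (i,j) = (\<Sum>k<N. ?A $$ (i,k) * cofactor ?A j k)"
      using i j by (simp add: adj_mat_def scalar_prod_def atLeast0LessThan)
    moreover have "(?A * adj_mat ?A) $$ (i,j) = (if i = j then det ?A else 0)"
      using i j by (simp add: adj_mat(2)[OF cm_carrier])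
    ultimately show "ent \<psi> x j * (\<Sum>k<N. ?A $$ (i,k) * cofactor ?A j k) = ent \<psi> x j * (if i = j then det ?A else 0)"
      by simp
  qed
  also have "\<dots> = (\<Sum>j<N. if i = j then ent \<psi> x j * det ?A else 0)"
    by (rule sum.cong) auto
  also have "\<dots> = om N \<psi> B * ent \<psi> x i" using i by (simp add: om_def)
  finally show ?thesis by simp
qed

lemma om_cramer:
  assumes N: "0 < N"
  shows "om N \<psi> B * om N \<psi> (Y(N-1 := x)) = (\<Sum>k<N. om N \<psi> (B(k:=x)) * om N \<psi> (Y(N-1 := B k)))"
proof -
  let ?c = "\<lambda>i. cofactor (cm N \<psi> Y) i (N-1)"
  have "om N \<psi> B * om N \<psi> (Y(N-1 := x)) = om N \<psi> B * (\<Sum>i<N. ent \<psi> x i * ?c i)"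
    using N by (simp add: om_lin)
  also have "\<dots> = (\<Sum>i<N. (om N \<psi> B * ent \<psi> x i) * ?c i)"
    by (simp only: sum_distrib_left mult.assoc)
  also have "\<dots> = (\<Sum>i<N. (\<Sum>k<N. om N \<psi> (B(k:=x)) * ent \<psi> (B k) i) * ?c i)"
    by (rule sum.cong[OF refl]) (simp add: om_cramer_vec)
  also have "\<dots> = (\<Sum>i<N. \<Sum>k<N. om N \<psi> (B(k:=x)) * (ent \<psi> (B k) i * ?c i))"
    by (simp only: sum_distrib_right mult.assoc)
  also have "\<dots> = (\<Sum>k<N. \<Sum>i<N. om N \<psi> (B(k:=x)) * (ent \<psi> (B k) i * ?c i))"
    by (rule sum.swap)
  also have "\<dots> = (\<Sum>k<N. om N \<psi> (B(k:=x)) * (\<Sum>i<N. ent \<psi> (B k) i * ?c i))"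
    by (simp only: sum_distrib_left)
  also have "\<dots> = (\<Sum>k<N. om N \<psi> (B(k:=x)) * om N \<psi> (Y(N-1 := B k)))"
    using N by (simp add: om_lin)
  finally show ?thesis .
qed

definition CC :: "nat \<Rightarrow> (nat \<Rightarrow> complex vec) \<Rightarrow> complex poly \<Rightarrow> complex" where
  "CC N \<psi> F = om N \<psi> (\<lambda>j. F * X^j)"
definition GG :: "nat \<Rightarrow> (nat \<Rightarrow> complex vec) \<Rightarrow> complex poly \<Rightarrow> complex" where
  "GG N \<psi> F = om N \<psi> (\<lambda>j. if j = N - 1 then F * X^N else F * X^j)"

lemma sign_aux: "s < N \<Longrightarrow> (-1::complex)^N * (-1)^(N-1-s) = - ((-1)^s)"
proof -
  assume s: "s < N"
  define m where "m = N - 1 - s"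
  have N: "N = Suc (s + m)" using s by (simp add: m_def)
  have "(-1::complex)^N * (-1)^(N-1-s) = - ((-1)^s * ((-1)^m * (-1)^m))"
    unfolding N m_def[symmetric] by (simp add: power_add)
  also have "(-1::complex)^m * (-1)^m = 1" by (simp add: power_add[symmetric])
  finally show ?thesis by simp
qed

lemma neg_pow: "(-z)^n = (-1)^n * (z::complex)^n"
  by (metis mult_minus1 power_mult_distrib)

lemma sign_sq: "(-1::complex)^n * (-1)^n = 1" by (simp add: power_add[symmetric])

fun Sg :: "complex \<Rightarrow> nat \<Rightarrow> complex poly" where
  "Sg v 0 = 0"
| "Sg v (Suc t) = smult (-v) (Sg v t) + X^t"

lemma Sg_eq: "[:v,1:] * Sg v t = X^t - [:(-v)^t:]"
proof (induction t)
  case 0 then show ?case by simp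
next
  case (Suc t)
  have "[:v,1:] * Sg v (Suc t) = smult (-v) ([:v,1:] * Sg v t) + [:v,1:] * X^t"
    by (simp add: algebra_simps)
  also have "\<dots> = smult (-v) (X^t - [:(-v)^t:]) + (smult v (X^t) + X * X^t)"
  proof -
    have "[:v,1:] * X^t = smult v (X^t) + X * X^t" by (rule lin_X)
    thus ?thesis by (simp only: Suc.IH)
  qed
  also have "\<dots> = X^Suc t - [:(-v)^Suc t:]"
    by (simp add: algebra_simps smult_diff_right)
  finally show ?case .
qed

lemma alg_aux: "cu*(h*gv + (A + S*cv)) = h*gu*cv + (A*cu + Z) \<Longrightarrow> h*(cu*gv - gu*cv) + S*cu*cv - Z = (0::complex)"
  by (simp add: algebra_simps)

lemma master:
  fixes I :: "'a set" and v lam :: "'a \<Rightarrow> complex" and W :: "'a \<Rightarrow> complex poly"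
  assumes N: "0 < N" and I: "finite I"
    and V: "\<And>i. i \<in> I \<Longrightarrow> V = [:v i, 1:] * W i"
    and u: "u = smult h V + (\<Sum>i\<in>I. smult (lam i) (W i))"
  shows "h * (CC N \<psi> u * GG N \<psi> V - GG N \<psi> u * CC N \<psi> V) + (\<Sum>i\<in>I. lam i) * CC N \<psi> u * CC N \<psi> V
     - (\<Sum>i\<in>I. lam i * CC N \<psi> (u * [:v i,1:]) * CC N \<psi> (W i)) = 0"
proof -
  define BV where "BV = (\<lambda>j. V * X^j)"
  define Bu where "Bu = (\<lambda>j. u * X^j)"
  define phi where "phi p = om N \<psi> (BV(N-1 := p))" for p
  define c where "c k = om N \<psi> (Bu(k := u * X^N))" for k
  have N1: "N - 1 < N" using N by simp
  have phi_add: "phi (p + q) = phi p + phi q" for p q unfolding phi_def using N1 by (rule om_add)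
  have phi_smult: "phi (smult a p) = a * phi p" for a p unfolding phi_def using N1 by (rule om_smult)
  have phi_sum: "phi (\<Sum>i\<in>I. f i) = (\<Sum>i\<in>I. phi (f i))" for f :: "'a \<Rightarrow> complex poly"
    unfolding phi_def using N1 by (rule om_sum)
  have phiV: "phi (V * X^k) = (if k = N-1 then CC N \<psi> V else 0)" if k: "k < N" for k
  proof (cases "k = N - 1")
    case True
    have "BV(N-1 := V * X^k) = BV" using True by (auto simp: BV_def)
    thus ?thesis using True by (simp add: phi_def CC_def BV_def)
  next
    case False
    have "om N \<psi> (BV(N-1 := V * X^k)) = 0"
      by (rule om_alt[of k N "N-1"]) (use k False N1 in \<open>auto simp: BV_def\<close>)
    thus ?thesis using False by (simp add: phi_def)
  qed
  have phiVN: "phi (V * X^N) = GG N \<psi> V"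
    unfolding phi_def GG_def by (rule om_cong) (auto simp: BV_def)
  have phiVS: "t \<le> N \<Longrightarrow> phi (V * Sg w t) = (if t = N then CC N \<psi> V else 0)" for t w
  proof (induction t)
    case 0 then show ?case using N by (simp add: phi_def om_lin)
  next
    case (Suc t)
    have "V * Sg w (Suc t) = smult (-w) (V * Sg w t) + V * X^t"
      by (simp only: Sg.simps distrib_left mult_smult_right)
    hence "phi (V * Sg w (Suc t)) = -w * phi (V * Sg w t) + phi (V * X^t)"
      by (simp only: phi_add phi_smult)
    also have "phi (V * Sg w t) = 0" using Suc by simp
    also have "phi (V * X^t) = (if t = N - 1 then CC N \<psi> V else 0)" using Suc.prems by (intro phiV) simp
    finally show ?case using Suc.prems by auto
  qed
  have phiW: "phi (W i * X^t) = (-v i)^t * phi (W i) + (if t = N then CC N \<psi> V else 0)"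
    if i: "i \<in> I" and t: "t \<le> N" for i t
  proof -
    have "V * Sg (v i) t = W i * ([:v i,1:] * Sg (v i) t)" using V[OF i] by (simp add: algebra_simps)
    also have "\<dots> = W i * X^t - smult ((-v i)^t) (W i)" by (simp only: Sg_eq) (simp add: right_diff_distrib)
    finally have h: "V * Sg (v i) t = W i * X^t - smult ((-v i)^t) (W i)" .
    hence "W i * X^t = smult ((-v i)^t) (W i) + V * Sg (v i) t" by (metis add.commute diff_add_cancel)
    hence "phi (W i * X^t) = (-v i)^t * phi (W i) + phi (V * Sg (v i) t)" by (simp add: phi_add phi_smult)
    thus ?thesis using phiVS[OF t] by simp
  qed
  have phiu: "phi (u * X^t) = h * phi (V * X^t) + (\<Sum>i\<in>I. lam i * phi (W i * X^t))" for t
  proof -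
    have "u * X^t = smult h (V * X^t) + (\<Sum>i\<in>I. smult (lam i) (W i * X^t))"
      unfolding u by (simp add: algebra_simps sum_distrib_right sum_distrib_left mult_smult_left mult_smult_right)
    thus ?thesis by (simp add: phi_add phi_smult phi_sum)
  qed
  have cram: "CC N \<psi> u * phi (u * X^N) = (\<Sum>k<N. c k * phi (u * X^k))"
    unfolding CC_def phi_def c_def
    using om_cramer[OF N, of \<psi> Bu BV "u * X^N"] by (simp add: Bu_def)
  have cN1: "c (N-1) = GG N \<psi> u"
    unfolding c_def GG_def by (rule om_cong) (auto simp: Bu_def)
  have expand: "CC N \<psi> (u * [:z,1:]) = z^N * CC N \<psi> u + (\<Sum>s<N. z^s * ((-1)^(N-1-s) * c s))" for z
  proof -
    have "CC N \<psi> (u * [:z,1:]) = om N \<psi> (\<lambda>j. smult z (Bu j) + Bu (Suc j))"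
      unfolding CC_def by (rule om_cong) (simp add: Bu_def lin_X algebra_simps)
    also have "\<dots> = (\<Sum>s\<le>N. z^s * om N \<psi> (\<lambda>j. if j < s then Bu j else Bu (Suc j)))"
      by (rule om_expand)
    also have "\<dots> = (\<Sum>s<N. z^s * om N \<psi> (\<lambda>j. if j < s then Bu j else Bu (Suc j))) + z^N * CC N \<psi> u"
    proof -
      have "om N \<psi> (\<lambda>j. if j < N then Bu j else Bu (Suc j)) = CC N \<psi> u"
        unfolding CC_def by (rule om_cong) (simp add: Bu_def)
      thus ?thesis by (simp add: lessThan_Suc_atMost[symmetric])
    qed
    also have "(\<Sum>s<N. z^s * om N \<psi> (\<lambda>j. if j < s then Bu j else Bu (Suc j))) = (\<Sum>s<N. z^s * ((-1)^(N-1-s) * c s))"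
    proof (rule sum.cong[OF refl])
      fix s assume s: "s \<in> {..<N}"
      have "c s = (-1)^(N-1-s) * om N \<psi> (\<lambda>j. if j<s then Bu j else if j < N-1 then Bu (Suc j) else u * X^N)"
        unfolding c_def by (rule om_move) (use s in auto)
      also have "om N \<psi> (\<lambda>j. if j<s then Bu j else if j < N-1 then Bu (Suc j) else u * X^N)
          = om N \<psi> (\<lambda>j. if j < s then Bu j else Bu (Suc j))"
      proof (rule om_cong)
        fix j assume j: "j < N"
        show "(if j<s then Bu j else if j < N-1 then Bu (Suc j) else u * X^N) = (if j < s then Bu j else Bu (Suc j))"
        proof (cases "j < N - 1")
          case False
          hence "Suc j = N" using j by simp
          hence "Bu (Suc j) = u * X^N" by (simp only: Bu_def)
          thus ?thesis using False by simp
        qed (simp add: Bu_def)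
      qed
      finally have "(-1)^(N-1-s) * c s = om N \<psi> (\<lambda>j. if j < s then Bu j else Bu (Suc j))"
        by (simp add: mult.assoc[symmetric] sign_sq)
      thus "z^s * om N \<psi> (\<lambda>j. if j < s then Bu j else Bu (Suc j)) = z^s * ((-1)^(N-1-s) * c s)" by simp
    qed
    finally show ?thesis by simp
  qed
  have sumc: "(\<Sum>k<N. c k * (-z)^k) = (-z)^N * CC N \<psi> u - (-1)^N * CC N \<psi> (u * [:z,1:])" for z
  proof -
    have "(-1)^N * CC N \<psi> (u * [:z,1:]) = (-1)^N * (z^N * CC N \<psi> u) + (\<Sum>s<N. (-1)^N * (z^s * ((-1)^(N-1-s) * c s)))"
      by (simp only: expand distrib_left sum_distrib_left)
    also have "(-1)^N * (z^N * CC N \<psi> u) = (-z)^N * CC N \<psi> u" by (simp add: neg_pow[of z N])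
    also have "(\<Sum>s<N. (-1)^N * (z^s * ((-1)^(N-1-s) * c s))) = (\<Sum>s<N. - (c s * (-z)^s))"
    proof (rule sum.cong[OF refl])
      fix s assume s: "s \<in> {..<N}"
      have "(-1)^N * (z^s * ((-1)^(N-1-s) * c s)) = ((-1)^N * (-1)^(N-1-s)) * (z^s * c s)"
        by (simp only: mult_ac)
      also have "\<dots> = - ((-1)^s * z^s * c s)" by (subst sign_aux) (use s in auto)
      also have "(-1)^s * z^s = (-z)^s" by (simp add: neg_pow[of z s])
      finally show "(-1)^N * (z^s * ((-1)^(N-1-s) * c s)) = - (c s * (-z)^s)" by (simp only: mult_ac)
    qed
    finally show ?thesis by (simp add: sum_negf)
  qed
  have phiWC: "phi (W i) = (-1)^(N-1) * CC N \<psi> (W i)" if i: "i \<in> I" for i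
  proof -
    have "CC N \<psi> (W i) = om N \<psi> (\<lambda>j. if j = 0 then W i else V * X^(j-1))"
      unfolding CC_def by (rule om_newton[OF V[OF i] N])
    also have "\<dots> = om N \<psi> ((\<lambda>j. V * X^(j-1))(0 := W i))" by (rule om_cong) auto
    also have "\<dots> = (-1)^(N-1-0) * om N \<psi> (\<lambda>j. if j<0 then V * X^(j-1) else if j < N-1 then V * X^(Suc j - 1) else W i)"
      by (rule om_move) (use N in auto)
    also have "om N \<psi> (\<lambda>j. if j<0 then V * X^(j-1) else if j < N-1 then V * X^(Suc j - 1) else W i) = phi (W i)"
      unfolding phi_def by (rule om_cong) (auto simp: BV_def)
    finally have "CC N \<psi> (W i) = (-1)^(N-1) * phi (W i)" by simp
    hence "(-1)^(N-1) * CC N \<psi> (W i) = ((-1)^(N-1) * (-1)^(N-1)) * phi (W i)" by simp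
    thus ?thesis by (simp only: sign_sq) simp
  qed
  define P where "P i = phi (W i)" for i
  have L: "CC N \<psi> u * phi (u * X^N) = CC N \<psi> u * (h * GG N \<psi> V + (\<Sum>i\<in>I. lam i * ((-v i)^N * P i + CC N \<psi> V)))"
    by (simp add: phiu phiVN phiW P_def cong: sum.cong)
  have R: "(\<Sum>k<N. c k * phi (u * X^k)) = h * GG N \<psi> u * CC N \<psi> V + (\<Sum>i\<in>I. lam i * P i * (\<Sum>k<N. c k * (-v i)^k))"
  proof -
    have "(\<Sum>k<N. c k * phi (u * X^k)) = (\<Sum>k<N. h * (c k * (if k = N-1 then CC N \<psi> V else 0)) + (\<Sum>i\<in>I. lam i * P i * (c k * (-v i)^k)))"
    proof (rule sum.cong[OF refl])
      fix k assume k: "k \<in> {..<N}"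
      have "phi (u * X^k) = h * (if k = N-1 then CC N \<psi> V else 0) + (\<Sum>i\<in>I. lam i * ((-v i)^k * P i))"
        using k by (simp add: phiu phiV phiW P_def cong: sum.cong)
      thus "c k * phi (u * X^k) = h * (c k * (if k = N-1 then CC N \<psi> V else 0)) + (\<Sum>i\<in>I. lam i * P i * (c k * (-v i)^k))"
        by (simp add: distrib_left sum_distrib_left mult_ac)
    qed
    also have "\<dots> = h * (\<Sum>k<N. c k * (if k = N-1 then CC N \<psi> V else 0)) + (\<Sum>i\<in>I. lam i * P i * (\<Sum>k<N. c k * (-v i)^k))"
      by (simp add: sum.distrib sum_distrib_left sum.swap[of _ I])
    also have "(\<Sum>k<N. c k * (if k = N-1 then CC N \<psi> V else 0)) = c (N-1) * CC N \<psi> V"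
      using N1 by (simp add: if_distrib cong: if_cong)
    moreover have "c (N - Suc 0) = GG N \<psi> u" using cN1 by simp
    ultimately show ?thesis by (simp add: mult_ac)
  qed
  have R2: "(\<Sum>i\<in>I. lam i * P i * (\<Sum>k<N. c k * (-v i)^k))
      = (\<Sum>i\<in>I. lam i * (-v i)^N * P i) * CC N \<psi> u + (\<Sum>i\<in>I. lam i * CC N \<psi> (u * [:v i,1:]) * CC N \<psi> (W i))"
  proof -
    have "(\<Sum>i\<in>I. lam i * P i * (\<Sum>k<N. c k * (-v i)^k))
       = (\<Sum>i\<in>I. lam i * (-v i)^N * P i * CC N \<psi> u + lam i * CC N \<psi> (u * [:v i,1:]) * CC N \<psi> (W i))"
    proof (rule sum.cong[OF refl])
      fix i assume i: "i \<in> I"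
      have Pf: "P i * (-1)^N = - CC N \<psi> (W i)"
      proof -
        have "P i * (-1)^N = (-1)^(N-1) * (-1)^N * CC N \<psi> (W i)" using phiWC[OF i] by (simp add: P_def mult_ac)
        also have "(-1::complex)^(N-1) * (-1)^N = -1"
          using N by (cases N) (auto simp: sign_sq)
        finally show ?thesis by simp
      qed
      define Y where "Y = CC N \<psi> (u * [:v i,1:])"
      have "lam i * P i * (\<Sum>k<N. c k * (-v i)^k) = lam i * P i * ((-v i)^N * CC N \<psi> u - (-1)^N * Y)"
        by (simp only: sumc Y_def)
      also have "\<dots> = lam i * (-v i)^N * P i * CC N \<psi> u - lam i * Y * (P i * (-1)^N)"
        by (simp only: right_diff_distrib mult_ac)
      also have "\<dots> = lam i * (-v i)^N * P i * CC N \<psi> u + lam i * Y * CC N \<psi> (W i)"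
        by (simp only: Pf) simp
      finally show "lam i * P i * (\<Sum>k<N. c k * (-v i)^k) = lam i * (-v i)^N * P i * CC N \<psi> u + lam i * CC N \<psi> (u * [:v i,1:]) * CC N \<psi> (W i)"
        by (simp only: Y_def)
    qed
    thus ?thesis by (simp add: sum.distrib sum_distrib_right)
  qed
  have main: "CC N \<psi> u * (h * GG N \<psi> V + (\<Sum>i\<in>I. lam i * ((-v i)^N * P i + CC N \<psi> V)))
      = h * GG N \<psi> u * CC N \<psi> V + ((\<Sum>i\<in>I. lam i * (-v i)^N * P i) * CC N \<psi> u + (\<Sum>i\<in>I. lam i * CC N \<psi> (u * [:v i,1:]) * CC N \<psi> (W i)))"
    using cram L R R2 by simp
  have e1: "(\<Sum>i\<in>I. lam i * ((-v i)^N * P i + CC N \<psi> V)) = (\<Sum>i\<in>I. lam i * (-v i)^N * P i) + (\<Sum>i\<in>I. lam i) * CC N \<psi> V"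
    by (simp add: distrib_left sum.distrib sum_distrib_right mult_ac)
  from main[unfolded e1] show ?thesis by (rule alg_aux)
qed


lemma ent_X_pow: "ent \<psi> (X^l) i = \<psi> l $ i"
proof (induction l arbitrary: \<psi>)
  case 0 then show ?case by (simp add: ent_def)
next
  case (Suc l)
  have "X^Suc l = pCons 0 (X^l)" by simp
  thus ?case by (simp only: ent_pCons Suc) simp
qed

lemma frame_step:
  assumes "\<forall>l i. i < N \<longrightarrow> \<chi> l $ i = ent \<psi> (F * X^l) i"
    and "\<forall>l i. i < N \<longrightarrow> \<chi>' l $ i = s * \<chi> l $ i + \<chi> (Suc l) $ i"
    and "G = F * [:s,1:]"
  shows "\<forall>l i. i < N \<longrightarrow> \<chi>' l $ i = ent \<psi> (G * X^l) i"
proof (intro allI impI)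
  fix l i assume i: "i < N"
  have "G * X^l = smult s (F * X^l) + F * X^(Suc l)"
    unfolding assms(3) by (simp add: lin_X algebra_simps)
  thus "\<chi>' l $ i = ent \<psi> (G * X^l) i" using assms(1,2) i by (simp add: ent_add ent_smult)
qed

declare mult_pCons_left[simp del] mult_pCons_right[simp del]

lemma HM_gen:
  assumes N: "0 < N" and bc: "b \<noteq> c"
    and "Pa = H*[:a,1:]" "Pbc = H*[:b,1:]*[:c,1:]" "Pab = H*[:a,1:]*[:b,1:]" "Pc = H*[:c,1:]"
        "Pac = H*[:a,1:]*[:c,1:]" "Pb = H*[:b,1:]"
  shows "(c-b) * CC N \<psi> Pa * CC N \<psi> Pbc - (a-b) * CC N \<psi> Pab * CC N \<psi> Pc + (a-c) * CC N \<psi> Pac * CC N \<psi> Pb = 0"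
proof -
  define v where "v i = (if i = (0::nat) then b else c)" for i
  define W where "W i = (if i = (0::nat) then H*[:c,1:] else H*[:b,1:])" for i
  define lam where "lam i = (if i = (0::nat) then (a-b)/(c-b) else (c-a)/(c-b))" for i
  have V: "H*[:b,1:]*[:c,1:] = [:v i,1:] * W i" if "i \<in> {0,1}" for i
  proof -
    have "i = 0 \<or> i = 1" using that by auto
    moreover have "H*[:b,1:]*[:c,1:] = [:b,1:] * (H*[:c,1:])" "H*[:b,1:]*[:c,1:] = [:c,1:] * (H*[:b,1:])"
      by (simp_all only: mult_ac)
    ultimately show ?thesis by (auto simp: v_def W_def)
  qed
  have cb: "c - b \<noteq> 0" "b - c \<noteq> 0" using bc by auto
  have l0: "lam 0 = (a-b)/(c-b)" and l1: "lam 1 = (c-a)/(c-b)" by (simp_all add: lam_def)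
  have e1: "lam 0 * c + lam 1 * b = a"
  proof -
    have "lam 0 * c + lam 1 * b = ((a-b)*c + (c-a)*b)/(c-b)" unfolding l0 l1 by (simp add: add_divide_distrib)
    also have "(a-b)*c + (c-a)*b = a*(c-b)" by (simp add: algebra_simps)
    finally show ?thesis using cb by simp
  qed
  have e2: "lam 0 + lam 1 = 1"
  proof -
    have "lam 0 + lam 1 = ((a-b) + (c-a))/(c-b)" unfolding l0 l1 by (rule add_divide_distrib[symmetric])
    also have "(a-b) + (c-a) = c - b" by simp
    finally show ?thesis using cb by simp
  qed
  have inner: "smult (lam 0) [:c,1:] + smult (lam 1) [:b,1:] = [:a,1:]"
    using e1 e2 by (simp add: mult.commute)
  have u: "H*[:a,1:] = smult 0 (H*[:b,1:]*[:c,1:]) + (\<Sum>i\<in>{0::nat,1}. smult (lam i) (W i))"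
  proof -
    have "(\<Sum>i\<in>{0::nat,1}. smult (lam i) (W i)) = smult (lam 0) (H*[:c,1:]) + smult (lam 1) (H*[:b,1:])"
      by (simp add: W_def del: mult_pCons_right mult_pCons_left)
    also have "\<dots> = H * (smult (lam 0) [:c,1:] + smult (lam 1) [:b,1:])"
      by (simp only: distrib_left mult_smult_right)
    also have "\<dots> = H * [:a,1:]" by (simp only: inner)
    finally have s: "(\<Sum>i\<in>{0::nat,1}. smult (lam i) (W i)) = H * [:a,1:]" .
    show ?thesis by (simp only: s smult_0_left add_0_left)
  qed
  have fin: "finite {0::nat,1}" by simp
  note m = master[OF N fin V u, where \<psi>=\<psi>]
  have m2: "CC N \<psi> (H*[:a,1:]) * CC N \<psi> (H*[:b,1:]*[:c,1:]) - ((a-b)/(c-b) * CC N \<psi> (H*[:a,1:]*[:b,1:]) * CC N \<psi> (H*[:c,1:])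
     + (c-a)/(c-b) * CC N \<psi> (H*[:a,1:]*[:c,1:]) * CC N \<psi> (H*[:b,1:])) = 0"
  proof -
    have l1': "lam (Suc 0) = (c-a)/(c-b)" by (simp add: lam_def)
    have e2': "(a-b)/(c-b) + (c-a)/(c-b) = 1" using e2 l0 l1 by simp
    show ?thesis using m by (simp add: e2' l0 l1' v_def W_def)
  qed
  have alg: "A1 * B1 - ((a-b)/(c-b) * X1 * Y1 + (c-a)/(c-b) * X2 * Y2) = 0 \<Longrightarrow>
     (c-b) * A1 * B1 - (a-b) * X1 * Y1 + (a-c) * X2 * Y2 = 0" for A1 B1 X1 Y1 X2 Y2 :: complex
  proof -
    assume h: "A1 * B1 - ((a-b)/(c-b) * X1 * Y1 + (c-a)/(c-b) * X2 * Y2) = 0"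
    hence "(c-b)*(A1*B1) = (c-b)*((a-b)/(c-b) * X1 * Y1 + (c-a)/(c-b) * X2 * Y2)" by simp
    also have "\<dots> = (a-b) * X1 * Y1 + (c-a) * X2 * Y2" using cb by (simp add: distrib_left)
    finally show ?thesis by (simp add: algebra_simps)
  qed
  show ?thesis using alg[OF m2] assms(3-8) by simp
qed

lemma B_gen:
  assumes N: "0 < N"
    and "Pa = H*[:a,1:]" "Pc = H*[:c,1:]" "Pac = H*[:a,1:]*[:c,1:]"
  shows "CC N \<psi> Pa * GG N \<psi> Pc - GG N \<psi> Pa * CC N \<psi> Pc + (a-c) * CC N \<psi> Pa * CC N \<psi> Pc - (a-c) * CC N \<psi> Pac * CC N \<psi> H = 0"
proof -
  have V: "H*[:c,1:] = [:(\<lambda>_. c) i,1:] * (\<lambda>_. H) i" if "i \<in> {0::nat}" for i by (simp add: mult_ac)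
  have u: "H*[:a,1:] = smult 1 (H*[:c,1:]) + (\<Sum>i\<in>{0::nat}. smult ((\<lambda>_. a - c) i) ((\<lambda>_. H) i))"
  proof -
    have "[:a,1:] = [:c,1:] + [:a - c:]" by simp
    hence "H*[:a,1:] = H*[:c,1:] + H * [:a-c:]" by (metis distrib_left)
    thus ?thesis by (simp add: mult.commute mult_pCons_right)
  qed
  have fin: "finite {0::nat}" by simp
  note m = master[OF N fin V u, where \<psi>=\<psi>]
  thus ?thesis using assms by simp
qed

lemma K_ent:
  fixes K :: "complex mat"
  assumes "\<forall>l i. i < N \<longrightarrow> (\<Sum>j<N. K $$ (i,j) * (\<psi> l $ j)) =
      \<psi> (Suc (Suc (Suc (Suc l)))) $ i - e1 * \<psi> (Suc (Suc (Suc l))) $ i + e2 * \<psi> (Suc (Suc l)) $ i - e3 * \<psi> (Suc l) $ i"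
    and "i < N"
  shows "(\<Sum>j<N. K $$ (i,j) * ent \<psi> q j) = ent \<psi> ([:0,-e3,e2,-e1,1:] * q) i"
  using assms
proof (induction q arbitrary: \<psi> rule: pCons_induct)
  case 0 then show ?case by simp
next
  case (pCons a q)
  let ?P = "[:0,-e3,e2,-e1,1:]"
  let ?\<psi>' = "\<lambda>k. \<psi> (Suc k)"
  have h': "\<forall>l i. i < N \<longrightarrow> (\<Sum>j<N. K $$ (i,j) * (?\<psi>' l $ j)) =
      ?\<psi>' (Suc (Suc (Suc (Suc l)))) $ i - e1 * ?\<psi>' (Suc (Suc (Suc l))) $ i + e2 * ?\<psi>' (Suc (Suc l)) $ i - e3 * ?\<psi>' (Suc l) $ i"
    using pCons.prems(1) by blast
  have IH: "(\<Sum>j<N. K $$ (i,j) * ent ?\<psi>' q j) = ent ?\<psi>' (?P * q) i"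
    using pCons.IH[OF h' pCons.prems(2)] .
  have K0: "(\<Sum>j<N. K $$ (i,j) * (\<psi> 0 $ j)) = \<psi> (Suc (Suc (Suc (Suc 0)))) $ i - e1 * \<psi> (Suc (Suc (Suc 0))) $ i + e2 * \<psi> (Suc (Suc 0)) $ i - e3 * \<psi> (Suc 0) $ i"
    using pCons.prems by blast
  have "(\<Sum>j<N. K $$ (i,j) * ent \<psi> (pCons a q) j)
      = (\<Sum>j<N. a * (K $$ (i,j) * (\<psi> 0 $ j)) + K $$ (i,j) * ent ?\<psi>' q j)"
    by (rule sum.cong[OF refl]) (simp only: ent_pCons distrib_left mult.left_commute)
  also have "\<dots> = a * (\<Sum>j<N. K $$ (i,j) * (\<psi> 0 $ j)) + (\<Sum>j<N. K $$ (i,j) * ent ?\<psi>' q j)"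
    by (simp only: sum.distrib sum_distrib_left)
  also have "\<dots> = a * (\<psi> (Suc (Suc (Suc (Suc 0)))) $ i - e1 * \<psi> (Suc (Suc (Suc 0))) $ i + e2 * \<psi> (Suc (Suc 0)) $ i - e3 * \<psi> (Suc 0) $ i) + ent ?\<psi>' (?P * q) i"
    by (simp only: K0 IH)
  also have "ent \<psi> (?P * pCons a q) i = a * ent \<psi> ?P i + ent ?\<psi>' (?P * q) i"
  proof -
    have "?P * pCons a q = smult a ?P + pCons 0 (?P * q)" by (rule mult_pCons_right)
    hence "ent \<psi> (?P * pCons a q) i = a * ent \<psi> ?P i + (0 * (\<psi> 0 $ i) + ent ?\<psi>' (?P * q) i)"
      by (simp only: ent_add ent_smult ent_pCons)
    thus ?thesis by simp
  qed
  moreover have "ent \<psi> ?P i = \<psi> (Suc (Suc (Suc (Suc 0)))) $ i - e1 * \<psi> (Suc (Suc (Suc 0))) $ i + e2 * \<psi> (Suc (Suc 0)) $ i - e3 * \<psi> (Suc 0) $ i"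
  proof -
    have "ent \<psi> ?P i = 0 * (\<psi> 0 $ i) + (-e3 * (\<psi> (Suc 0) $ i) + (e2 * (\<psi> (Suc (Suc 0)) $ i) + (-e1 * (\<psi> (Suc (Suc (Suc 0))) $ i) + (1 * (\<psi> (Suc (Suc (Suc (Suc 0)))) $ i) + ent (\<lambda>k. \<psi> (Suc (Suc (Suc (Suc (Suc k)))))) 0 i))))"
      by (simp only: ent_pCons)
    thus ?thesis by (simp only: ent_0) (simp add: algebra_simps)
  qed
  ultimately show ?case by simp
qed

lemma om_K:
  fixes K :: "complex mat"
  assumes Kc: "K \<in> carrier_mat N N"
    and Kpsi: "\<forall>l i. i < N \<longrightarrow> (\<Sum>j<N. K $$ (i,j) * (\<psi> l $ j)) =
      \<psi> (Suc (Suc (Suc (Suc l)))) $ i - e1 * \<psi> (Suc (Suc (Suc l))) $ i + e2 * \<psi> (Suc (Suc l)) $ i - e3 * \<psi> (Suc l) $ i"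
  shows "om N \<psi> (\<lambda>j. [:-c,-e3,e2,-e1,1:] * B j) = det (K - c \<cdot>\<^sub>m 1\<^sub>m N) * om N \<psi> B"
proof -
  let ?P = "[:0,-e3,e2,-e1,1:]"
  have uP: "[:-c,-e3,e2,-e1,1:] = ?P - [:c:]" by simp
  have "cm N \<psi> (\<lambda>j. [:-c,-e3,e2,-e1,1:] * B j) = (K - c \<cdot>\<^sub>m 1\<^sub>m N) * cm N \<psi> B"
  proof (rule eq_matI)
    fix i j assume i: "i < dim_row ((K - c \<cdot>\<^sub>m 1\<^sub>m N) * cm N \<psi> B)" and j: "j < dim_col ((K - c \<cdot>\<^sub>m 1\<^sub>m N) * cm N \<psi> B)"
    hence i: "i < N" and j: "j < N" using Kc by auto
    have "((K - c \<cdot>\<^sub>m 1\<^sub>m N) * cm N \<psi> B) $$ (i,j) = (\<Sum>k<N. (K $$ (i,k) - c * (if i = k then 1 else 0)) * ent \<psi> (B j) k)"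
      using i j Kc by (simp add: scalar_prod_def atLeast0LessThan cm_def)
    also have "\<dots> = (\<Sum>k<N. K $$ (i,k) * ent \<psi> (B j) k) - (\<Sum>k<N. (if i = k then c * ent \<psi> (B j) k else 0))"
      by (simp only: left_diff_distrib sum_subtractf) (rule arg_cong2[where f="(-)"], rule refl, rule sum.cong, auto)
    also have "\<dots> = (\<Sum>k<N. K $$ (i,k) * ent \<psi> (B j) k) - c * ent \<psi> (B j) i"
      using i by (simp add: sum.delta)
    also have "\<dots> = ent \<psi> (?P * B j) i - c * ent \<psi> (B j) i" using K_ent[OF Kpsi i] by simp
    also have "\<dots> = ent \<psi> ([:-c,-e3,e2,-e1,1:] * B j) i"
      by (simp only: uP left_diff_distrib ent_minus) (simp add: mult_pCons_left ent_smult)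
    finally show "cm N \<psi> (\<lambda>j. [:-c,-e3,e2,-e1,1:] * B j) $$ (i,j) = ((K - c \<cdot>\<^sub>m 1\<^sub>m N) * cm N \<psi> B) $$ (i,j)"
      using i j by (simp add: cm_def)
  qed (use Kc in auto)
  moreover have "K - c \<cdot>\<^sub>m 1\<^sub>m N \<in> carrier_mat N N" using Kc unfolding carrier_mat_def by auto
  ultimately show ?thesis unfolding om_def using det_mult[OF _ cm_carrier, of "K - c \<cdot>\<^sub>m 1\<^sub>m N" N \<psi> B] by simp
qed

lemma prod3_expand: "[:a,1:]*[:b,1:]*[:c,1::complex:] = [:a*b*c, a*b+a*c+b*c, a+b+c, 1:]"
  by (simp add: mult_pCons_left mult_pCons_right algebra_simps)

lemma prod4_expand: "[:a,1:]*[:b,1:]*[:c,1:]*[:d,1::complex:] =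
   [:a*b*c*d, a*b*c + a*b*d + a*c*d + b*c*d, a*b + a*c + a*d + b*c + b*d + c*d, a+b+c+d, 1:]"
  by (simp add: prod3_expand mult_pCons_left mult_pCons_right algebra_simps)

lemma Q_factor: "(x^4 + e1*x^3 + e2*x^2 + e3*x) - (y^4 + e1*y^3 + e2*y^2 + e3*y) = (x - y) * Rpoly e1 e2 e3 x (y::complex)"
  unfolding Rpoly_def by (simp add: algebra_simps power2_eq_square power3_eq_cube power4_eq_xxxx)

lemma lagrange4:
  fixes s1 s2 s3 s4 c e1 e2 e3 :: complex
  assumes d: "s1 \<noteq> s2" "s1 \<noteq> s3" "s1 \<noteq> s4" "s2 \<noteq> s3" "s2 \<noteq> s4" "s3 \<noteq> s4"
  assumes sv_def: "sv = (\<lambda>i::nat. if i = 1 then s1 else if i = 2 then s2 else if i = 3 then s3 else s4)"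
    and W_def: "W = (\<lambda>i::nat. if i = 1 then [:s2,1:]*[:s3,1:]*[:s4,1:] else if i = 2 then [:s1,1:]*[:s3,1:]*[:s4,1:]
              else if i = 3 then [:s1,1:]*[:s2,1:]*[:s4,1:] else [:s1,1:]*[:s2,1:]*[:s3,1:])"
    and Q_def: "Q = (\<lambda>x. x^4 + e1*x^3 + e2*x^2 + e3*x)"
    and lam_def: "lam = (\<lambda>i. (Q (sv i) - c) / poly (W i) (- sv i))"
  shows "[:-c,-e3,e2,-e1,1:] = smult 1 ([:s1,1:]*[:s2,1:]*[:s3,1:]*[:s4,1:]) + (\<Sum>i\<in>{1::nat,2,3,4}. smult (lam i) (W i))"
proof (rule poly_eqI_degree_lead_coeff[where n=4 and A="{-s1,-s2,-s3,-s4}"])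
  have W1: "W 1 = [:s2*s3*s4, s2*s3+s2*s4+s3*s4, s2+s3+s4, 1:]"
   and W2: "W 2 = [:s1*s3*s4, s1*s3+s1*s4+s3*s4, s1+s3+s4, 1:]"
   and W3: "W 3 = [:s1*s2*s4, s1*s2+s1*s4+s2*s4, s1+s2+s4, 1:]"
   and W4: "W 4 = [:s1*s2*s3, s1*s2+s1*s3+s2*s3, s1+s2+s3, 1:]"
    by (simp_all add: W_def prod3_expand)
  note V = prod4_expand[of s1 s2 s3 s4]
  have dW: "i \<in> {1::nat,2,3,4} \<Longrightarrow> degree (W i) = 3" for i
  proof -
    assume "i \<in> {1::nat,2,3,4}"
    hence "i = 1 \<or> i = 2 \<or> i = 3 \<or> i = 4" by blast
    thus ?thesis by (elim disjE) (simp_all only: W1 W2 W3 W4, simp_all)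
  qed
  show "coeff [:-c,-e3,e2,-e1,1:] 4 = coeff (smult 1 ([:s1,1:]*[:s2,1:]*[:s3,1:]*[:s4,1:]) + (\<Sum>i\<in>{1::nat,2,3,4}. smult (lam i) (W i))) 4"
  proof -
    have "coeff (\<Sum>i\<in>{1::nat,2,3,4}. smult (lam i) (W i)) 4 = (\<Sum>i\<in>{1::nat,2,3,4}. lam i * coeff (W i) 4)"
      by (simp add: coeff_sum)
    also have "\<dots> = 0" by (rule sum.neutral) (auto intro!: coeff_eq_0 simp: dW)
    finally have "coeff (\<Sum>i\<in>{1::nat,2,3,4}. smult (lam i) (W i)) 4 = 0" .
    moreover have "coeff ([:s1,1:]*[:s2,1:]*[:s3,1:]*[:s4,1:]) 4 = 1" by (simp add: V numeral_eq_Suc)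
    moreover have "coeff [:-c,-e3,e2,-e1,1:] 4 = 1" by (simp add: numeral_eq_Suc)
    ultimately show ?thesis by simp
  qed
  show "4 \<le> card {-s1,-s2,-s3,-s4}" using d by auto
  show "degree [:-c,-e3,e2,-e1,1:] \<le> 4" by simp
  show "degree (smult 1 ([:s1,1:]*[:s2,1:]*[:s3,1:]*[:s4,1:]) + (\<Sum>i\<in>{1::nat,2,3,4}. smult (lam i) (W i))) \<le> 4"
  proof -
    have "degree (\<Sum>i\<in>{1::nat,2,3,4}. smult (lam i) (W i)) \<le> 4"
    proof (rule degree_sum_le)
      fix i assume "i \<in> {1::nat,2,3,4}"
      thus "degree (smult (lam i) (W i)) \<le> 4" using dW[of i] degree_smult_le[of "lam i" "W i"] by linarith
    qed simp
    moreover have "degree (smult 1 ([:s1,1:]*[:s2,1:]*[:s3,1:]*[:s4,1:])) \<le> 4" by (simp add: V)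
    ultimately show ?thesis by (meson degree_add_le)
  qed
  fix z assume "z \<in> {-s1,-s2,-s3,-s4}"
  hence "z = - sv 1 \<or> z = - sv 2 \<or> z = - sv 3 \<or> z = - sv 4" by (simp add: sv_def)
  then obtain k where k: "k \<in> {1::nat,2,3,4}" and z: "z = - sv k" by blast
  have Dnz: "poly (W k) (- sv k) \<noteq> 0" using k d by (auto simp: W_def sv_def)
  have Wz: "i \<in> {1::nat,2,3,4} \<Longrightarrow> i \<noteq> k \<Longrightarrow> poly (W i) (- sv k) = 0" for i
    using k by (auto simp: W_def sv_def)
  have "poly (\<Sum>i\<in>{1::nat,2,3,4}. smult (lam i) (W i)) z = (\<Sum>i\<in>{1::nat,2,3,4}. lam i * poly (W i) z)"
    by (simp add: poly_sum)
  also have "\<dots> = (\<Sum>i\<in>{1::nat,2,3,4}. if i = k then lam k * poly (W k) z else 0)"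
    by (rule sum.cong[OF refl]) (auto simp: z Wz)
  also have "\<dots> = lam k * poly (W k) z" using k by (simp add: sum.delta')
  also have "\<dots> = Q (sv k) - c" using Dnz by (simp add: lam_def z)
  finally have R: "poly (\<Sum>i\<in>{1::nat,2,3,4}. smult (lam i) (W i)) z = Q (sv k) - c" .
  have V0: "poly ([:s1,1:]*[:s2,1:]*[:s3,1:]*[:s4,1:]) z = 0" using k by (auto simp: z sv_def)
  have L: "poly [:-c,-e3,e2,-e1,1:] z = Q (sv k) - c"
    by (simp add: z Q_def algebra_simps power2_eq_square power3_eq_cube power4_eq_xxxx)
  show "poly [:-c,-e3,e2,-e1,1:] z = poly (smult 1 ([:s1,1:]*[:s2,1:]*[:s3,1:]*[:s4,1:]) + (\<Sum>i\<in>{1::nat,2,3,4}. smult (lam i) (W i))) z"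
    using L R V0 by simp
qed

lemma div_aux1: "(a::complex) \<noteq> 0 \<Longrightarrow> a * R / (Y * (-a)) = - (R / Y)"
  by (cases "Y = 0") (auto simp: field_simps)
lemma div_aux2: "(a::complex) \<noteq> 0 \<Longrightarrow> a * R / (Y * a) = R / Y"
  by (cases "Y = 0") (auto simp: field_simps)

lemma lc: "x = 0 \<Longrightarrow> y = c * x \<Longrightarrow> y = (0::complex)" by simp

lemma E8_gen:
  fixes K :: "complex mat" and \<psi> :: "nat \<Rightarrow> complex vec" and s1 s2 s3 s4 e1 e2 e3 :: complex
  assumes N: "0 < N" and Kc: "K \<in> carrier_mat N N"
    and Kpsi: "\<forall>l i. i < N \<longrightarrow> (\<Sum>j<N. K $$ (i,j) * (\<psi> l $ j)) =
      \<psi> (Suc (Suc (Suc (Suc l)))) $ i - e1 * \<psi> (Suc (Suc (Suc l))) $ i + e2 * \<psi> (Suc (Suc l)) $ i - e3 * \<psi> (Suc l) $ i"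
    and d: "s1 \<noteq> s2" "s1 \<noteq> s3" "s1 \<noteq> s4" "s2 \<noteq> s3" "s2 \<noteq> s4" "s3 \<noteq> s4"
  shows "(s3 * CC N \<psi> 1 + GG N \<psi> 1) * CC N \<psi> ([:s1,1:]*[:s2,1:]*[:s3,1:]*[:s4,1:])
      - CC N \<psi> 1 * (GG N \<psi> ([:s1,1:]*[:s2,1:]*[:s3,1:]*[:s4,1:]) - s4 * CC N \<psi> ([:s1,1:]*[:s2,1:]*[:s3,1:]*[:s4,1:]))
      - Rpoly e1 e2 e3 s1 s4 / ((s1-s2)*(s1-s3)) * CC N \<psi> ([:s2,1:]*[:s3,1:]*[:s4,1:]) * CC N \<psi> [:s1,1:]
      + Rpoly e1 e2 e3 s2 s4 / ((s1-s2)*(s2-s3)) * CC N \<psi> ([:s1,1:]*[:s3,1:]*[:s4,1:]) * CC N \<psi> [:s2,1:]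
      + (s1 + s2 + e1) * CC N \<psi> 1 * CC N \<psi> ([:s1,1:]*[:s2,1:]*[:s3,1:]*[:s4,1:])
      - Rpoly e1 e2 e3 s3 s4 / ((s1-s3)*(s2-s3)) * CC N \<psi> [:s3,1:] * CC N \<psi> ([:s1,1:]*[:s2,1:]*[:s4,1:]) = 0"
proof -
  define sv where "sv = (\<lambda>i::nat. if i = 1 then s1 else if i = 2 then s2 else if i = 3 then s3 else s4)"
  define W where "W = (\<lambda>i::nat. if i = 1 then [:s2,1:]*[:s3,1:]*[:s4,1:] else if i = 2 then [:s1,1:]*[:s3,1:]*[:s4,1:]
              else if i = 3 then [:s1,1:]*[:s2,1:]*[:s4,1:] else [:s1,1:]*[:s2,1:]*[:s3,1:])"
  define Q where "Q = (\<lambda>x::complex. x^4 + e1*x^3 + e2*x^2 + e3*x)"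
  define lam where "lam c i = (Q (sv i) - c) / poly (W i) (- sv i)" for c i
  define V where "V = [:s1,1:]*[:s2,1:]*[:s3,1:]*[:s4,1:]"
  define I where "I = {1::nat,2,3,4}"
  define u where "u c = [:-c,-e3,e2,-e1,1:]" for c
  define \<kappa> where "\<kappa> c = det (K - c \<cdot>\<^sub>m 1\<^sub>m N)" for c
  have sv: "sv 1 = s1" "sv 2 = s2" "sv 3 = s3" "sv 4 = s4" by (simp_all add: sv_def)
  have Ws: "W 1 = [:s2,1:]*[:s3,1:]*[:s4,1:]" "W 2 = [:s1,1:]*[:s3,1:]*[:s4,1:]"
     "W 3 = [:s1,1:]*[:s2,1:]*[:s4,1:]" "W 4 = [:s1,1:]*[:s2,1:]*[:s3,1:]" by (simp_all add: W_def)
  have finI: "finite I" by (simp add: I_def)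
  have VW: "V = [:sv i,1:] * W i" if "i \<in> I" for i
  proof -
    have "i = 1 \<or> i = 2 \<or> i = 3 \<or> i = 4" using that by (auto simp: I_def)
    thus ?thesis by (elim disjE) (simp_all only: sv Ws V_def mult_ac)
  qed
  have PI: "u c = smult 1 V + (\<Sum>i\<in>I. smult (lam c i) (W i))" for c
    unfolding u_def V_def I_def
    by (rule lagrange4[OF d sv_def W_def Q_def]) (simp add: lam_def fun_eq_iff)
  have S: "(\<Sum>i\<in>I. lam c i) = -e1 - (s1+s2+s3+s4)" for c
  proof -
    have cW: "i \<in> I \<Longrightarrow> coeff (W i) 3 = 1" for i
    proof -
      assume "i \<in> I"
      hence "i = 1 \<or> i = 2 \<or> i = 3 \<or> i = 4" by (auto simp: I_def)
      thus ?thesis by (elim disjE) (simp_all only: Ws prod3_expand, simp_all add: numeral_eq_Suc)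
    qed
    have "coeff (u c) 3 = coeff (smult 1 V + (\<Sum>i\<in>I. smult (lam c i) (W i))) 3" by (simp only: PI)
    also have "\<dots> = coeff V 3 + (\<Sum>i\<in>I. lam c i * coeff (W i) 3)" by (simp add: coeff_sum)
    also have "(\<Sum>i\<in>I. lam c i * coeff (W i) 3) = (\<Sum>i\<in>I. lam c i)" by (rule sum.cong) (simp_all add: cW)
    also have "coeff V 3 = s1+s2+s3+s4" by (simp add: V_def prod4_expand numeral_eq_Suc)
    also have "coeff (u c) 3 = -e1" by (simp add: u_def numeral_eq_Suc)
    finally show ?thesis by (simp add: algebra_simps)
  qed
  have redC: "CC N \<psi> (u c * F) = \<kappa> c * CC N \<psi> F" for c F
  proof -
    have "CC N \<psi> (u c * F) = om N \<psi> (\<lambda>j. [:-c,-e3,e2,-e1,1:] * (F * X^j))"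
      unfolding CC_def u_def by (simp add: mult.assoc)
    also have "\<dots> = \<kappa> c * CC N \<psi> F" unfolding \<kappa>_def CC_def by (rule om_K[OF Kc Kpsi])
    finally show ?thesis .
  qed
  have redC1: "CC N \<psi> (u c) = \<kappa> c * CC N \<psi> 1" for c using redC[of c 1] by simp
  have redG: "GG N \<psi> (u c) = \<kappa> c * GG N \<psi> 1" for c
  proof -
    have "GG N \<psi> (u c) = om N \<psi> (\<lambda>j. [:-c,-e3,e2,-e1,1:] * (if j = N - 1 then X^N else X^j))"
      unfolding GG_def u_def by (rule om_cong) simp
    also have "\<dots> = \<kappa> c * GG N \<psi> 1" unfolding \<kappa>_def GG_def
      by (subst om_K[OF Kc Kpsi]) (simp add: if_distrib cong: if_cong)
    finally show ?thesis .
  qed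
  define A where "A i = CC N \<psi> [:sv i,1:] * CC N \<psi> (W i)" for i
  define Br where "Br c = (CC N \<psi> 1 * GG N \<psi> V - GG N \<psi> 1 * CC N \<psi> V) + (-e1 - (s1+s2+s3+s4)) * CC N \<psi> 1 * CC N \<psi> V
      - (\<Sum>i\<in>I. lam c i * A i)" for c
  have kBr: "\<kappa> c * Br c = 0" for c
  proof -
    have m: "1 * (CC N \<psi> (u c) * GG N \<psi> V - GG N \<psi> (u c) * CC N \<psi> V) + (\<Sum>i\<in>I. lam c i) * CC N \<psi> (u c) * CC N \<psi> V
       - (\<Sum>i\<in>I. lam c i * CC N \<psi> (u c * [:sv i,1:]) * CC N \<psi> (W i)) = 0"
      by (rule master[OF N finI VW PI])
    have "(\<Sum>i\<in>I. lam c i * CC N \<psi> (u c * [:sv i,1:]) * CC N \<psi> (W i)) = \<kappa> c * (\<Sum>i\<in>I. lam c i * A i)"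
      by (simp add: redC A_def sum_distrib_left mult_ac)
    with m show ?thesis by (simp add: Br_def S redC1 redG algebra_simps)
  qed
  have cpnz: "char_poly K \<noteq> 0"
  proof
    assume "char_poly K = 0"
    hence "coeff (char_poly K) N = 0" by simp
    thus False using degree_monic_char_poly[OF Kc] by simp
  qed
  have kappa_nz: "\<kappa> c \<noteq> 0" if "poly (char_poly K) c \<noteq> 0" for c
  proof -
    have cm: "char_matrix K c \<in> carrier_mat N N" using Kc by simp
    have "det (- char_matrix K c) \<noteq> 0" using that char_poly_matrix[OF Kc] by simp
    hence "det (char_matrix K c) \<noteq> 0" using det_0_negate[OF cm] by simp
    moreover have "char_matrix K c = K - c \<cdot>\<^sub>m 1\<^sub>m N"
      unfolding char_matrix_def using Kc by (intro eq_matI) auto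
    ultimately show ?thesis by (simp add: \<kappa>_def)
  qed
  have finR: "finite {x. poly (char_poly K) x = 0}" by (rule poly_roots_finite[OF cpnz])
  obtain c1 where c1: "c1 \<notin> {x. poly (char_poly K) x = 0}"
    using ex_new_if_finite[OF infinite_UNIV_char_0 finR] by blast
  obtain c2 where c2: "c2 \<notin> insert c1 {x. poly (char_poly K) x = 0}"
    using ex_new_if_finite[OF infinite_UNIV_char_0] finR by blast
  have B1: "Br c1 = 0" using kBr[of c1] kappa_nz[of c1] c1 by simp
  have B2: "Br c2 = 0" using kBr[of c2] kappa_nz[of c2] c2 by simp
  have c12: "c1 \<noteq> c2" using c2 by auto
  define D where "D i = poly (W i) (- sv i)" for i
  define B0 where "B0 = (CC N \<psi> 1 * GG N \<psi> V - GG N \<psi> 1 * CC N \<psi> V) + (-e1 - (s1+s2+s3+s4)) * CC N \<psi> 1 * CC N \<psi> V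
      - (\<Sum>i\<in>I. Q (sv i) / D i * A i)"
  define Z1 where "Z1 = (\<Sum>i\<in>I. A i / D i)"
  have aff: "Br c = B0 + c * Z1" for c
  proof -
    have "(\<Sum>i\<in>I. lam c i * A i) = (\<Sum>i\<in>I. Q (sv i) / D i * A i) - c * Z1"
      by (simp add: lam_def D_def Z1_def diff_divide_distrib left_diff_distrib sum_subtractf sum_distrib_left)
    thus ?thesis by (simp add: Br_def B0_def)
  qed
  have "(c1 - c2) * Z1 = (B0 + c1 * Z1) - (B0 + c2 * Z1)" by (simp add: algebra_simps)
  also have "\<dots> = 0" using B1 B2 aff[of c1] aff[of c2] by simp
  finally have "(c1 - c2) * Z1 = 0" .
  hence Z0: "Z1 = 0" using c12 by simp
  hence BB: "B0 = 0" using B1 aff[of c1] by simp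
  have Bq: "Br (Q s4) = 0" using aff[of "Q s4"] Z0 BB by simp
  have D1: "D 1 = (s2 - s1) * (s3 - s1) * (s4 - s1)" unfolding D_def sv(1) Ws(1) by (simp add: algebra_simps)
  have D2: "D 2 = (s1 - s2) * (s3 - s2) * (s4 - s2)" unfolding D_def sv(2) Ws(2) by (simp add: algebra_simps)
  have D3: "D 3 = (s1 - s3) * (s2 - s3) * (s4 - s3)" unfolding D_def sv(3) Ws(3) by (simp add: algebra_simps)
  have nz: "s2 - s1 \<noteq> 0" "s3 - s1 \<noteq> 0" "s4 - s1 \<noteq> 0" "s1 - s2 \<noteq> 0" "s3 - s2 \<noteq> 0" "s4 - s2 \<noteq> 0"
     "s1 - s3 \<noteq> 0" "s2 - s3 \<noteq> 0" "s4 - s3 \<noteq> 0" using d by auto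
  have l1: "lam (Q s4) 1 = - (Rpoly e1 e2 e3 s1 s4 / ((s1-s2)*(s1-s3)))"
  proof -
    have "lam (Q s4) 1 = (s1 - s4) * Rpoly e1 e2 e3 s1 s4 / ((s2 - s1) * (s3 - s1) * (s4 - s1))"
    proof -
      have "lam (Q s4) 1 = (Q s1 - Q s4) / D 1" by (simp only: lam_def D_def sv(1))
      also have "Q s1 - Q s4 = (s1 - s4) * Rpoly e1 e2 e3 s1 s4" unfolding Q_def by (rule Q_factor)
      finally show ?thesis by (simp only: D1)
    qed
    also have "(s2 - s1) * (s3 - s1) * (s4 - s1) = ((s1-s2)*(s1-s3)) * (-(s1-s4))" by (simp add: algebra_simps)
    also have "(s1 - s4) * Rpoly e1 e2 e3 s1 s4 / (((s1-s2)*(s1-s3)) * (-(s1-s4))) = - (Rpoly e1 e2 e3 s1 s4 / ((s1-s2)*(s1-s3)))"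
      using d by (intro div_aux1) simp
    finally show ?thesis .
  qed
  have l2: "lam (Q s4) 2 = Rpoly e1 e2 e3 s2 s4 / ((s1-s2)*(s2-s3))"
  proof -
    have "lam (Q s4) 2 = (s2 - s4) * Rpoly e1 e2 e3 s2 s4 / ((s1 - s2) * (s3 - s2) * (s4 - s2))"
    proof -
      have "lam (Q s4) 2 = (Q s2 - Q s4) / D 2" by (simp only: lam_def D_def sv(2))
      also have "Q s2 - Q s4 = (s2 - s4) * Rpoly e1 e2 e3 s2 s4" unfolding Q_def by (rule Q_factor)
      finally show ?thesis by (simp only: D2)
    qed
    also have "(s1 - s2) * (s3 - s2) * (s4 - s2) = ((s1-s2)*(s2-s3)) * (s2-s4)" by (simp add: algebra_simps)
    also have "(s2 - s4) * Rpoly e1 e2 e3 s2 s4 / (((s1-s2)*(s2-s3)) * (s2-s4)) = Rpoly e1 e2 e3 s2 s4 / ((s1-s2)*(s2-s3))"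
      using d by (intro div_aux2) simp
    finally show ?thesis .
  qed
  have l3: "lam (Q s4) 3 = - (Rpoly e1 e2 e3 s3 s4 / ((s1-s3)*(s2-s3)))"
  proof -
    have "lam (Q s4) 3 = (s3 - s4) * Rpoly e1 e2 e3 s3 s4 / ((s1 - s3) * (s2 - s3) * (s4 - s3))"
    proof -
      have "lam (Q s4) 3 = (Q s3 - Q s4) / D 3" by (simp only: lam_def D_def sv(3))
      also have "Q s3 - Q s4 = (s3 - s4) * Rpoly e1 e2 e3 s3 s4" unfolding Q_def by (rule Q_factor)
      finally show ?thesis by (simp only: D3)
    qed
    also have "(s1 - s3) * (s2 - s3) * (s4 - s3) = ((s1-s3)*(s2-s3)) * (-(s3-s4))" by (simp add: algebra_simps)
    also have "(s3 - s4) * Rpoly e1 e2 e3 s3 s4 / (((s1-s3)*(s2-s3)) * (-(s3-s4))) = - (Rpoly e1 e2 e3 s3 s4 / ((s1-s3)*(s2-s3)))"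
      using d by (intro div_aux1) simp
    finally show ?thesis .
  qed
  have l4: "lam (Q s4) 4 = 0" by (simp add: lam_def sv)
  have sumI: "(\<Sum>i\<in>I. lam (Q s4) i * A i) = lam (Q s4) 1 * A 1 + lam (Q s4) 2 * A 2 + lam (Q s4) 3 * A 3 + lam (Q s4) 4 * A 4"
    by (simp add: I_def)
  have A123: "A 1 = CC N \<psi> [:s1,1:] * CC N \<psi> ([:s2,1:]*[:s3,1:]*[:s4,1:])"
     "A 2 = CC N \<psi> [:s2,1:] * CC N \<psi> ([:s1,1:]*[:s3,1:]*[:s4,1:])"
     "A 3 = CC N \<psi> [:s3,1:] * CC N \<psi> ([:s1,1:]*[:s2,1:]*[:s4,1:])"
    by (simp_all only: A_def sv Ws)
  from Bq show ?thesis
    unfolding Br_def sumI l1 l2 l3 l4 A123 V_def[symmetric]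
    by (simp add: algebra_simps)
qed

theorem theorem5p2:
  fixes a1 a2 a3 \<delta> p q a b :: complex
    and N :: nat
    and \<phi> :: "int \<Rightarrow> int \<Rightarrow> int \<Rightarrow> int \<Rightarrow> int \<Rightarrow> complex vec"
    and K :: "complex mat"
    and n m al be :: int
  defines "s1 \<equiv> p - \<delta>" and "s2 \<equiv> q - \<delta>" and "s3 \<equiv> a - \<delta>" and "s4 \<equiv> b - \<delta>"
    and "e1 \<equiv> eps1 \<delta> a3" and "e2 \<equiv> eps2 \<delta> a2 a3" and "e3 \<equiv> eps3 \<delta> a1 a2 a3"
    and "R \<equiv> Rpoly (eps1 \<delta> a3) (eps2 \<delta> a2 a3) (eps3 \<delta> a1 a2 a3)"
    and "f \<equiv> fC N \<phi>" and "g \<equiv> gC N \<phi>"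
  assumes dist: "distinct [p, q, a, b]"
    and N1: "N \<ge> 1"
    and Kc: "K \<in> carrier_mat N N"
    and dim: "\<And>n m al be l. dim_vec (\<phi> n m al be l) = N"
    and cn: "\<And>n m al be l. s1 \<cdot>\<^sub>v \<phi> (n-1) m al be l = \<phi> n m al be l - \<phi> (n-1) m al be (l+1)"
    and cm: "\<And>n m al be l. s2 \<cdot>\<^sub>v \<phi> n (m-1) al be l = \<phi> n m al be l - \<phi> n (m-1) al be (l+1)"
    and ca: "\<And>n m al be l. s3 \<cdot>\<^sub>v \<phi> n m (al-1) be l = \<phi> n m al be l - \<phi> n m (al-1) be (l+1)"
    and cb: "\<And>n m al be l. s4 \<cdot>\<^sub>v \<phi> n m al (be-1) l = \<phi> n m al be l - \<phi> n m al (be-1) (l+1)"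
    and cK: "\<And>n m al be l. K *\<^sub>v \<phi> n m al be l =
               \<phi> n m al be (l+4) - e1 \<cdot>\<^sub>v \<phi> n m al be (l+3) + e2 \<cdot>\<^sub>v \<phi> n m al be (l+2)
               - e3 \<cdot>\<^sub>v \<phi> n m al be (l+1)"
  shows
   "(s1-s3) * f (n+1) m al be * f n m (al-1) (be+1) - (s1-s4) * f n m al be * f (n+1) m (al-1) (be+1)
      + (s3-s4) * f n m al (be+1) * f (n+1) m (al-1) be = 0
  \<and> (s2-s3) * f n (m+1) al be * f n m (al-1) (be+1) - (s2-s4) * f n m al be * f n (m+1) (al-1) (be+1)
      + (s3-s4) * f n m al (be+1) * f n (m+1) (al-1) be = 0
  \<and> f n m al be * (s3 * f (n+1) m (al-1) be + g (n+1) m (al-1) be)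
      + (s1-s3) * f (n+1) m al be * f n m (al-1) be
      - (s1 * f n m al be + g n m al be) * f (n+1) m (al-1) be = 0
  \<and> f n m al be * (s3 * f n (m+1) (al-1) be + g n (m+1) (al-1) be)
      + (s2-s3) * f n (m+1) al be * f n m (al-1) be
      - (s2 * f n m al be + g n m al be) * f n (m+1) (al-1) be = 0
  \<and> f (n+1) m al be * (s1 * f n m al (be+1) + g n m al (be+1))
      - (s1-s4) * f n m al be * f (n+1) m al (be+1)
      - (s4 * f (n+1) m al be + g (n+1) m al be) * f n m al (be+1) = 0
  \<and> f n (m+1) al be * (s2 * f n m al (be+1) + g n m al (be+1))
      - (s2-s4) * f n m al be * f n (m+1) al (be+1)
      - (s4 * f n (m+1) al be + g n (m+1) al be) * f n m al (be+1) = 0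
  \<and> (s1-s4) * f (n+1) m al (be+1) * f n (m+1) al be
      - (s2-s4) * f n (m+1) al (be+1) * f (n+1) m al be
      - (s1-s2) * f (n+1) (m+1) al be * f n m al (be+1) = 0
  \<and> (s3 * f n m (al-1) be + g n m (al-1) be) * f (n+1) (m+1) al (be+1)
      - f n m (al-1) be * (g (n+1) (m+1) al (be+1) - s4 * f (n+1) (m+1) al (be+1))
      - R s1 s4 / ((s1-s2) * (s1-s3)) * f n (m+1) al (be+1) * f (n+1) m (al-1) be
      + R s2 s4 / ((s1-s2) * (s2-s3)) * f (n+1) m al (be+1) * f n (m+1) (al-1) be
      + (s1 + s2 + e1) * f n m (al-1) be * f (n+1) (m+1) al (be+1)
      - R s3 s4 / ((s1-s3) * (s2-s3)) * f n m al be * f (n+1) (m+1) (al-1) (be+1) = 0"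
proof -
  have N0: "0 < N" using N1 by simp
  have pq: "p \<noteq> q" "p \<noteq> a" "p \<noteq> b" "q \<noteq> a" "q \<noteq> b" "a \<noteq> b" using dist by auto
  have d12: "s1 \<noteq> s2" and d13: "s1 \<noteq> s3" and d14: "s1 \<noteq> s4" and d23: "s2 \<noteq> s3"
    and d24: "s2 \<noteq> s4" and d34: "s3 \<noteq> s4"
    using pq by (auto simp: s1_def s2_def s3_def s4_def)
  have stn: "\<phi> (n'+1) m' a' b' l $ i = s1 * \<phi> n' m' a' b' l $ i + \<phi> n' m' a' b' (l+1) $ i" if i: "i < N" for n' m' a' b' l i
  proof -
    have e: "s1 \<cdot>\<^sub>v \<phi> n' m' a' b' l = \<phi> (n'+1) m' a' b' l - \<phi> n' m' a' b' (l+1)" using cn[of "n'+1" m' a' b' l] by simp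
    have "(s1 \<cdot>\<^sub>v \<phi> n' m' a' b' l) $ i = (\<phi> (n'+1) m' a' b' l - \<phi> n' m' a' b' (l+1)) $ i" by (simp only: e)
    hence "s1 * \<phi> n' m' a' b' l $ i = \<phi> (n'+1) m' a' b' l $ i - \<phi> n' m' a' b' (l+1) $ i" using i dim by simp
    thus ?thesis by simp
  qed
  have stm: "\<phi> n' (m'+1) a' b' l $ i = s2 * \<phi> n' m' a' b' l $ i + \<phi> n' m' a' b' (l+1) $ i" if i: "i < N" for n' m' a' b' l i
  proof -
    have e: "s2 \<cdot>\<^sub>v \<phi> n' m' a' b' l = \<phi> n' (m'+1) a' b' l - \<phi> n' m' a' b' (l+1)" using cm[of n' "m'+1" a' b' l] by simp
    have "(s2 \<cdot>\<^sub>v \<phi> n' m' a' b' l) $ i = (\<phi> n' (m'+1) a' b' l - \<phi> n' m' a' b' (l+1)) $ i" by (simp only: e)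
    hence "s2 * \<phi> n' m' a' b' l $ i = \<phi> n' (m'+1) a' b' l $ i - \<phi> n' m' a' b' (l+1) $ i" using i dim by simp
    thus ?thesis by simp
  qed
  have sta: "\<phi> n' m' (a'+1) b' l $ i = s3 * \<phi> n' m' a' b' l $ i + \<phi> n' m' a' b' (l+1) $ i" if i: "i < N" for n' m' a' b' l i
  proof -
    have e: "s3 \<cdot>\<^sub>v \<phi> n' m' a' b' l = \<phi> n' m' (a'+1) b' l - \<phi> n' m' a' b' (l+1)" using ca[of n' m' "a'+1" b' l] by simp
    have "(s3 \<cdot>\<^sub>v \<phi> n' m' a' b' l) $ i = (\<phi> n' m' (a'+1) b' l - \<phi> n' m' a' b' (l+1)) $ i" by (simp only: e)
    hence "s3 * \<phi> n' m' a' b' l $ i = \<phi> n' m' (a'+1) b' l $ i - \<phi> n' m' a' b' (l+1) $ i" using i dim by simp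
    thus ?thesis by simp
  qed
  have stb: "\<phi> n' m' a' (b'+1) l $ i = s4 * \<phi> n' m' a' b' l $ i + \<phi> n' m' a' b' (l+1) $ i" if i: "i < N" for n' m' a' b' l i
  proof -
    have e: "s4 \<cdot>\<^sub>v \<phi> n' m' a' b' l = \<phi> n' m' a' (b'+1) l - \<phi> n' m' a' b' (l+1)" using cb[of n' m' a' "b'+1" l] by simp
    have "(s4 \<cdot>\<^sub>v \<phi> n' m' a' b' l) $ i = (\<phi> n' m' a' (b'+1) l - \<phi> n' m' a' b' (l+1)) $ i" by (simp only: e)
    hence "s4 * \<phi> n' m' a' b' l $ i = \<phi> n' m' a' (b'+1) l $ i - \<phi> n' m' a' b' (l+1) $ i" using i dim by simp
    thus ?thesis by simp
  qed
  define \<psi> where "\<psi> k = \<phi> n m (al-1) be (int k)" for k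
  define P where "P i1 i2 i3 i4 \<longleftrightarrow> (\<forall>l i. i < N \<longrightarrow> \<phi> (n + int i1) (m + int i2) (al - 1 + int i3) (be + int i4) (int l) $ i
      = ent \<psi> ([:s1,1:]^i1 * [:s2,1:]^i2 * [:s3,1:]^i3 * [:s4,1:]^i4 * X^l) i)" for i1 i2 i3 i4
  have P0: "P 0 0 0 0" unfolding P_def by (simp add: ent_X_pow \<psi>_def)
  have Pd: "P i1 i2 i3 (Suc i4)" if h: "P i1 i2 i3 i4" for i1 i2 i3 i4
    unfolding P_def
  proof (rule frame_step[OF h[unfolded P_def], where s = s4])
    show "\<forall>l i. i < N \<longrightarrow> \<phi> (n + int i1) (m + int i2) (al - 1 + int i3) (be + int (Suc i4)) (int l) $ i =
      s4 * \<phi> (n + int i1) (m + int i2) (al - 1 + int i3) (be + int i4) (int l) $ i + \<phi> (n + int i1) (m + int i2) (al - 1 + int i3) (be + int i4) (int (Suc l)) $ i"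
    proof (intro allI impI)
      fix l i assume i: "i < N"
      have "be + int (Suc i4) = (be + int i4) + 1" "int (Suc l) = int l + 1" by simp_all
      thus "\<phi> (n + int i1) (m + int i2) (al - 1 + int i3) (be + int (Suc i4)) (int l) $ i =
        s4 * \<phi> (n + int i1) (m + int i2) (al - 1 + int i3) (be + int i4) (int l) $ i + \<phi> (n + int i1) (m + int i2) (al - 1 + int i3) (be + int i4) (int (Suc l)) $ i"
        using stb[OF i] by (simp only:)
    qed
  qed (simp add: mult_ac)
  have Pc: "P i1 i2 (Suc i3) i4" if h: "P i1 i2 i3 i4" for i1 i2 i3 i4
    unfolding P_def
  proof (rule frame_step[OF h[unfolded P_def], where s = s3])
    show "\<forall>l i. i < N \<longrightarrow> \<phi> (n + int i1) (m + int i2) (al - 1 + int (Suc i3)) (be + int i4) (int l) $ i =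
      s3 * \<phi> (n + int i1) (m + int i2) (al - 1 + int i3) (be + int i4) (int l) $ i + \<phi> (n + int i1) (m + int i2) (al - 1 + int i3) (be + int i4) (int (Suc l)) $ i"
    proof (intro allI impI)
      fix l i assume i: "i < N"
      have "al - 1 + int (Suc i3) = (al - 1 + int i3) + 1" "int (Suc l) = int l + 1" by simp_all
      thus "\<phi> (n + int i1) (m + int i2) (al - 1 + int (Suc i3)) (be + int i4) (int l) $ i =
        s3 * \<phi> (n + int i1) (m + int i2) (al - 1 + int i3) (be + int i4) (int l) $ i + \<phi> (n + int i1) (m + int i2) (al - 1 + int i3) (be + int i4) (int (Suc l)) $ i"
        using sta[OF i] by (simp only:)
    qed
  qed (simp add: mult_ac)
  have Pb: "P i1 (Suc i2) i3 i4" if h: "P i1 i2 i3 i4" for i1 i2 i3 i4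
    unfolding P_def
  proof (rule frame_step[OF h[unfolded P_def], where s = s2])
    show "\<forall>l i. i < N \<longrightarrow> \<phi> (n + int i1) (m + int (Suc i2)) (al - 1 + int i3) (be + int i4) (int l) $ i =
      s2 * \<phi> (n + int i1) (m + int i2) (al - 1 + int i3) (be + int i4) (int l) $ i + \<phi> (n + int i1) (m + int i2) (al - 1 + int i3) (be + int i4) (int (Suc l)) $ i"
    proof (intro allI impI)
      fix l i assume i: "i < N"
      have "m + int (Suc i2) = (m + int i2) + 1" "int (Suc l) = int l + 1" by simp_all
      thus "\<phi> (n + int i1) (m + int (Suc i2)) (al - 1 + int i3) (be + int i4) (int l) $ i =
        s2 * \<phi> (n + int i1) (m + int i2) (al - 1 + int i3) (be + int i4) (int l) $ i + \<phi> (n + int i1) (m + int i2) (al - 1 + int i3) (be + int i4) (int (Suc l)) $ i"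
        using stm[OF i] by (simp only:)
    qed
  qed (simp add: mult_ac)
  have Pa: "P (Suc i1) i2 i3 i4" if h: "P i1 i2 i3 i4" for i1 i2 i3 i4
    unfolding P_def
  proof (rule frame_step[OF h[unfolded P_def], where s = s1])
    show "\<forall>l i. i < N \<longrightarrow> \<phi> (n + int (Suc i1)) (m + int i2) (al - 1 + int i3) (be + int i4) (int l) $ i =
      s1 * \<phi> (n + int i1) (m + int i2) (al - 1 + int i3) (be + int i4) (int l) $ i + \<phi> (n + int i1) (m + int i2) (al - 1 + int i3) (be + int i4) (int (Suc l)) $ i"
    proof (intro allI impI)
      fix l i assume i: "i < N"
      have "n + int (Suc i1) = (n + int i1) + 1" "int (Suc l) = int l + 1" by simp_all
      thus "\<phi> (n + int (Suc i1)) (m + int i2) (al - 1 + int i3) (be + int i4) (int l) $ i =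
        s1 * \<phi> (n + int i1) (m + int i2) (al - 1 + int i3) (be + int i4) (int l) $ i + \<phi> (n + int i1) (m + int i2) (al - 1 + int i3) (be + int i4) (int (Suc l)) $ i"
        using stn[OF i] by (simp only:)
    qed
  qed (simp add: mult_ac)
  have P000: "P 0 0 0 i4" for i4 by (induction i4) (auto intro: P0 Pd)
  have P00: "P 0 0 i3 i4" for i3 i4 by (induction i3) (auto intro: P000 Pc)
  have P0': "P 0 i2 i3 i4" for i2 i3 i4 by (induction i2) (auto intro: P00 Pb)
  have Pall: "P i1 i2 i3 i4" for i1 i2 i3 i4 by (induction i1) (auto intro: P0' Pa)
  have fCC: "f (n + int i1) (m + int i2) (al - 1 + int i3) (be + int i4) = CC N \<psi> ([:s1,1:]^i1 * [:s2,1:]^i2 * [:s3,1:]^i3 * [:s4,1:]^i4)" for i1 i2 i3 i4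
  proof -
    note h = Pall[of i1 i2 i3 i4, unfolded P_def]
    show ?thesis unfolding f_def fC_def casoratian_def CC_def om_def cm_def
      by (rule arg_cong[where f=det], rule eq_matI) (use h in auto)
  qed
  have gGG: "g (n + int i1) (m + int i2) (al - 1 + int i3) (be + int i4) = GG N \<psi> ([:s1,1:]^i1 * [:s2,1:]^i2 * [:s3,1:]^i3 * [:s4,1:]^i4)" for i1 i2 i3 i4
  proof -
    note h = Pall[of i1 i2 i3 i4, unfolded P_def]
    show ?thesis unfolding g_def gC_def casoratian_def GG_def om_def cm_def
      by (rule arg_cong[where f=det], rule eq_matI) (use h in auto)
  qed
  have f0000: "f n m (al-1) be = CC N \<psi> 1" using fCC[of 0 0 0 0] by simp
  have f1000: "f (n+1) m (al-1) be = CC N \<psi> [:s1,1:]" using fCC[of 1 0 0 0] by simp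
  have f0100: "f n (m+1) (al-1) be = CC N \<psi> [:s2,1:]" using fCC[of 0 1 0 0] by simp
  have f0010: "f n m al be = CC N \<psi> [:s3,1:]" using fCC[of 0 0 1 0] by simp
  have f0001: "f n m (al-1) (be+1) = CC N \<psi> [:s4,1:]" using fCC[of 0 0 0 1] by simp
  have f1010: "f (n+1) m al be = CC N \<psi> ([:s1,1:]*[:s3,1:])" using fCC[of 1 0 1 0] by simp
  have f1001: "f (n+1) m (al-1) (be+1) = CC N \<psi> ([:s1,1:]*[:s4,1:])" using fCC[of 1 0 0 1] by simp
  have f0011: "f n m al (be+1) = CC N \<psi> ([:s3,1:]*[:s4,1:])" using fCC[of 0 0 1 1] by simp
  have f0110: "f n (m+1) al be = CC N \<psi> ([:s2,1:]*[:s3,1:])" using fCC[of 0 1 1 0] by simp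
  have f0101: "f n (m+1) (al-1) (be+1) = CC N \<psi> ([:s2,1:]*[:s4,1:])" using fCC[of 0 1 0 1] by simp
  have f1011: "f (n+1) m al (be+1) = CC N \<psi> ([:s1,1:]*[:s3,1:]*[:s4,1:])" using fCC[of 1 0 1 1] by simp
  have f0111: "f n (m+1) al (be+1) = CC N \<psi> ([:s2,1:]*[:s3,1:]*[:s4,1:])" using fCC[of 0 1 1 1] by simp
  have f1110: "f (n+1) (m+1) al be = CC N \<psi> ([:s1,1:]*[:s2,1:]*[:s3,1:])" using fCC[of 1 1 1 0] by simp
  have f1111: "f (n+1) (m+1) al (be+1) = CC N \<psi> ([:s1,1:]*[:s2,1:]*[:s3,1:]*[:s4,1:])" using fCC[of 1 1 1 1] by simp
  have f1101: "f (n+1) (m+1) (al-1) (be+1) = CC N \<psi> ([:s1,1:]*[:s2,1:]*[:s4,1:])" using fCC[of 1 1 0 1] by simp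
  have g0000: "g n m (al-1) be = GG N \<psi> 1" using gGG[of 0 0 0 0] by simp
  have g1000: "g (n+1) m (al-1) be = GG N \<psi> [:s1,1:]" using gGG[of 1 0 0 0] by simp
  have g0100: "g n (m+1) (al-1) be = GG N \<psi> [:s2,1:]" using gGG[of 0 1 0 0] by simp
  have g0010: "g n m al be = GG N \<psi> [:s3,1:]" using gGG[of 0 0 1 0] by simp
  have g0011: "g n m al (be+1) = GG N \<psi> ([:s3,1:]*[:s4,1:])" using gGG[of 0 0 1 1] by simp
  have g1010: "g (n+1) m al be = GG N \<psi> ([:s1,1:]*[:s3,1:])" using gGG[of 1 0 1 0] by simp
  have g0110: "g n (m+1) al be = GG N \<psi> ([:s2,1:]*[:s3,1:])" using gGG[of 0 1 1 0] by simp
  have g1111: "g (n+1) (m+1) al (be+1) = GG N \<psi> ([:s1,1:]*[:s2,1:]*[:s3,1:]*[:s4,1:])" using gGG[of 1 1 1 1] by simp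
  have E1: "(s1-s3) * f (n+1) m al be * f n m (al-1) (be+1) - (s1-s4) * f n m al be * f (n+1) m (al-1) (be+1)
      + (s3-s4) * f n m al (be+1) * f (n+1) m (al-1) be = 0"
  proof -
    have h: "(s4-s3) * CC N \<psi> [:s1,1:] * CC N \<psi> ([:s3,1:]*[:s4,1:]) - (s1-s3) * CC N \<psi> ([:s1,1:]*[:s3,1:]) * CC N \<psi> [:s4,1:]
      + (s1-s4) * CC N \<psi> ([:s1,1:]*[:s4,1:]) * CC N \<psi> [:s3,1:] = 0"
      by (rule HM_gen[OF N0 d34, where H=1]) simp_all
    show ?thesis unfolding f1010 f0001 f0010 f1001 f0011 f1000 by (rule lc[OF h, where c="-1"]) (simp add: algebra_simps)
  qed
  have E2: "(s2-s3) * f n (m+1) al be * f n m (al-1) (be+1) - (s2-s4) * f n m al be * f n (m+1) (al-1) (be+1)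
      + (s3-s4) * f n m al (be+1) * f n (m+1) (al-1) be = 0"
  proof -
    have h: "(s4-s3) * CC N \<psi> [:s2,1:] * CC N \<psi> ([:s3,1:]*[:s4,1:]) - (s2-s3) * CC N \<psi> ([:s2,1:]*[:s3,1:]) * CC N \<psi> [:s4,1:]
      + (s2-s4) * CC N \<psi> ([:s2,1:]*[:s4,1:]) * CC N \<psi> [:s3,1:] = 0"
      by (rule HM_gen[OF N0 d34, where H=1]) simp_all
    show ?thesis unfolding f0110 f0001 f0010 f0101 f0011 f0100 by (rule lc[OF h, where c="-1"]) (simp add: algebra_simps)
  qed
  have E3: "f n m al be * (s3 * f (n+1) m (al-1) be + g (n+1) m (al-1) be)
      + (s1-s3) * f (n+1) m al be * f n m (al-1) be
      - (s1 * f n m al be + g n m al be) * f (n+1) m (al-1) be = 0"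
  proof -
    have h: "CC N \<psi> [:s1,1:] * GG N \<psi> [:s3,1:] - GG N \<psi> [:s1,1:] * CC N \<psi> [:s3,1:] + (s1-s3) * CC N \<psi> [:s1,1:] * CC N \<psi> [:s3,1:]
       - (s1-s3) * CC N \<psi> ([:s1,1:]*[:s3,1:]) * CC N \<psi> 1 = 0"
      by (rule B_gen[OF N0]) simp_all
    show ?thesis unfolding f0010 f1000 g1000 f1010 f0000 g0010 by (rule lc[OF h, where c="-1"]) (simp add: algebra_simps)
  qed
  have E4: "f n m al be * (s3 * f n (m+1) (al-1) be + g n (m+1) (al-1) be)
      + (s2-s3) * f n (m+1) al be * f n m (al-1) be
      - (s2 * f n m al be + g n m al be) * f n (m+1) (al-1) be = 0"
  proof -
    have h: "CC N \<psi> [:s2,1:] * GG N \<psi> [:s3,1:] - GG N \<psi> [:s2,1:] * CC N \<psi> [:s3,1:] + (s2-s3) * CC N \<psi> [:s2,1:] * CC N \<psi> [:s3,1:]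
       - (s2-s3) * CC N \<psi> ([:s2,1:]*[:s3,1:]) * CC N \<psi> 1 = 0"
      by (rule B_gen[OF N0]) simp_all
    show ?thesis unfolding f0010 f0100 g0100 f0110 f0000 g0010 by (rule lc[OF h, where c="-1"]) (simp add: algebra_simps)
  qed
  have E5: "f (n+1) m al be * (s1 * f n m al (be+1) + g n m al (be+1))
      - (s1-s4) * f n m al be * f (n+1) m al (be+1)
      - (s4 * f (n+1) m al be + g (n+1) m al be) * f n m al (be+1) = 0"
  proof -
    have h: "CC N \<psi> ([:s1,1:]*[:s3,1:]) * GG N \<psi> ([:s3,1:]*[:s4,1:]) - GG N \<psi> ([:s1,1:]*[:s3,1:]) * CC N \<psi> ([:s3,1:]*[:s4,1:])
       + (s1-s4) * CC N \<psi> ([:s1,1:]*[:s3,1:]) * CC N \<psi> ([:s3,1:]*[:s4,1:])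
       - (s1-s4) * CC N \<psi> ([:s1,1:]*[:s3,1:]*[:s4,1:]) * CC N \<psi> [:s3,1:] = 0"
      by (rule B_gen[OF N0, where H="[:s3,1:]"]) (simp_all add: mult_ac)
    show ?thesis unfolding f1010 f0011 g0011 f0010 f1011 g1010 by (rule lc[OF h, where c="1"]) (simp add: algebra_simps)
  qed
  have E6: "f n (m+1) al be * (s2 * f n m al (be+1) + g n m al (be+1))
      - (s2-s4) * f n m al be * f n (m+1) al (be+1)
      - (s4 * f n (m+1) al be + g n (m+1) al be) * f n m al (be+1) = 0"
  proof -
    have h: "CC N \<psi> ([:s2,1:]*[:s3,1:]) * GG N \<psi> ([:s3,1:]*[:s4,1:]) - GG N \<psi> ([:s2,1:]*[:s3,1:]) * CC N \<psi> ([:s3,1:]*[:s4,1:])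
       + (s2-s4) * CC N \<psi> ([:s2,1:]*[:s3,1:]) * CC N \<psi> ([:s3,1:]*[:s4,1:])
       - (s2-s4) * CC N \<psi> ([:s2,1:]*[:s3,1:]*[:s4,1:]) * CC N \<psi> [:s3,1:] = 0"
      by (rule B_gen[OF N0, where H="[:s3,1:]"]) (simp_all add: mult_ac)
    show ?thesis unfolding f0110 f0011 g0011 f0010 f0111 g0110 by (rule lc[OF h, where c="1"]) (simp add: algebra_simps)
  qed
  have E7: "(s1-s4) * f (n+1) m al (be+1) * f n (m+1) al be
      - (s2-s4) * f n (m+1) al (be+1) * f (n+1) m al be
      - (s1-s2) * f (n+1) (m+1) al be * f n m al (be+1) = 0"
  proof -
    have h: "(s2-s1) * CC N \<psi> ([:s3,1:]*[:s4,1:]) * CC N \<psi> ([:s1,1:]*[:s2,1:]*[:s3,1:])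
      - (s4-s1) * CC N \<psi> ([:s1,1:]*[:s3,1:]*[:s4,1:]) * CC N \<psi> ([:s2,1:]*[:s3,1:])
      + (s4-s2) * CC N \<psi> ([:s2,1:]*[:s3,1:]*[:s4,1:]) * CC N \<psi> ([:s1,1:]*[:s3,1:]) = 0"
      by (rule HM_gen[OF N0 d12, where H="[:s3,1:]"]) (simp_all add: mult_ac)
    show ?thesis unfolding f1011 f0110 f0111 f1010 f1110 f0011 by (rule lc[OF h, where c="1"]) (simp add: algebra_simps)
  qed
  have Kpsi: "\<forall>l i. i < N \<longrightarrow> (\<Sum>j<N. K $$ (i,j) * (\<psi> l $ j)) =
      \<psi> (Suc (Suc (Suc (Suc l)))) $ i - e1 * \<psi> (Suc (Suc (Suc l))) $ i + e2 * \<psi> (Suc (Suc l)) $ i - e3 * \<psi> (Suc l) $ i"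
  proof (intro allI impI)
    fix l i assume i: "i < N"
    have e: "K *\<^sub>v \<phi> n m (al-1) be (int l) = \<phi> n m (al-1) be (int l+4) - e1 \<cdot>\<^sub>v \<phi> n m (al-1) be (int l+3)
       + e2 \<cdot>\<^sub>v \<phi> n m (al-1) be (int l+2) - e3 \<cdot>\<^sub>v \<phi> n m (al-1) be (int l+1)" by (rule cK)
    have ints: "int l + 4 = int (Suc (Suc (Suc (Suc l))))" "int l + 3 = int (Suc (Suc (Suc l)))"
      "int l + 2 = int (Suc (Suc l))" "int l + 1 = int (Suc l)" by simp_all
    have "(K *\<^sub>v \<phi> n m (al-1) be (int l)) $ i = (\<Sum>j<N. K $$ (i,j) * (\<psi> l $ j))"
      using i Kc dim by (simp add: scalar_prod_def atLeast0LessThan \<psi>_def)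
    moreover have "(K *\<^sub>v \<phi> n m (al-1) be (int l)) $ i = \<psi> (Suc (Suc (Suc (Suc l)))) $ i - e1 * \<psi> (Suc (Suc (Suc l))) $ i + e2 * \<psi> (Suc (Suc l)) $ i - e3 * \<psi> (Suc l) $ i"
      unfolding e ints using i dim by (simp add: \<psi>_def)
    ultimately show "(\<Sum>j<N. K $$ (i,j) * (\<psi> l $ j)) =
      \<psi> (Suc (Suc (Suc (Suc l)))) $ i - e1 * \<psi> (Suc (Suc (Suc l))) $ i + e2 * \<psi> (Suc (Suc l)) $ i - e3 * \<psi> (Suc l) $ i" by simp
  qed
  have E8: "(s3 * f n m (al-1) be + g n m (al-1) be) * f (n+1) (m+1) al (be+1)
      - f n m (al-1) be * (g (n+1) (m+1) al (be+1) - s4 * f (n+1) (m+1) al (be+1))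
      - R s1 s4 / ((s1-s2) * (s1-s3)) * f n (m+1) al (be+1) * f (n+1) m (al-1) be
      + R s2 s4 / ((s1-s2) * (s2-s3)) * f (n+1) m al (be+1) * f n (m+1) (al-1) be
      + (s1 + s2 + e1) * f n m (al-1) be * f (n+1) (m+1) al (be+1)
      - R s3 s4 / ((s1-s3) * (s2-s3)) * f n m al be * f (n+1) (m+1) (al-1) (be+1) = 0"
  proof -
    have RR: "R = Rpoly e1 e2 e3" by (simp add: R_def e1_def e2_def e3_def)
    show ?thesis unfolding RR f0000 g0000 f1111 g1111 f0111 f1000 f1011 f0100 f0010 f1101
      by (rule E8_gen[OF N0 Kc Kpsi d12 d13 d14 d23 d24 d34])
  qed
  show ?thesis using E1 E2 E3 E4 E5 E6 E7 E8 by blast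
qed

end
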